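(* Let $(G,P,\Delta)$ be a Garside structure of finite type on $G$ and let $S$ be the set of non-trivial simple elements. Then $Flag(G,S)$ is systolic if and only if for all $a,b\in S$ one has $a\wedge_L b\in\{e,a,b\}$ and $a\wedge_R b\in\{e,a,b\}$. In particular, if $Flag(G,S)$ is systolic then $G$ is a systolic group.
   Context: A Garside structure $(G,P,\Delta)$ on a group $G$ consists of a submonoid $P$ with $P\cap P^{-1}=\{e\}$ and an element $\Delta\in P$ such that: (i) the partial order $a\le_L b\iff a^{-1}b\in P$ is a lattice order on $G$; (ii) the set of simple elements $[e,\Delta]=\{a\in G\mid e\le_L a\le_L\Delta\}$ generates $P$; (iii) $\Delta^{-1}P\Delta=P$; (iv) for every $x\in P\setminus\{e\}$, $\sup\{k\mid x=a_1\cdots a_k,\ a_i\in P\setminus\{e\}\}<\infty$. It is of finite type if $[e,\Delta]$ is finite. The order $a\le_R b\iff ba^{-1}\in P$ is also a lattice order, and $[e,\Delta]=\{a\mid e\le_R a\le_R\Delta\}$. $a\wedge_L b$ and $a\wedge_R b$ denote the greatest lower bounds for $\le_L$ and $\le_R$. For a finite generating set $S$ with $S\cap S^{-1}=\emptyset$, $Flag(G,S)$ is the flag complex of the Cayley graph (vertices $g\in G$, edges between $g$ and $gs$, $s\in S$). A simplicial complex is systolic if it is connected, simply connected and the link of every vertex is flag and $6$-large ($6$-large: every embedded cycle of length $4$ or $5$ has a diagonal). A group is systolic if it acts properly discontinuously and cocompactly on a systolic complex. *)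

theory Defs
  imports "HOL-Algebra.Group_Action"
begin

definition leL :: "('a, 'b) monoid_scheme \<Rightarrow> 'a set \<Rightarrow> 'a \<Rightarrow> 'a \<Rightarrow> bool" where
  "leL G P a b \<longleftrightarrow> inv\<^bsub>G\<^esub> a \<otimes>\<^bsub>G\<^esub> b \<in> P"

definition leR :: "('a, 'b) monoid_scheme \<Rightarrow> 'a set \<Rightarrow> 'a \<Rightarrow> 'a \<Rightarrow> bool" where
  "leR G P a b \<longleftrightarrow> b \<otimes>\<^bsub>G\<^esub> inv\<^bsub>G\<^esub> a \<in> P"

definition is_glb_on :: "'a set \<Rightarrow> ('a \<Rightarrow> 'a \<Rightarrow> bool) \<Rightarrow> 'a \<Rightarrow> 'a \<Rightarrow> 'a \<Rightarrow> bool" where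
  "is_glb_on A rel a b m \<longleftrightarrow> m \<in> A \<and> rel m a \<and> rel m b \<and>
     (\<forall>c\<in>A. rel c a \<and> rel c b \<longrightarrow> rel c m)"

definition is_lub_on :: "'a set \<Rightarrow> ('a \<Rightarrow> 'a \<Rightarrow> bool) \<Rightarrow> 'a \<Rightarrow> 'a \<Rightarrow> 'a \<Rightarrow> bool" where
  "is_lub_on A rel a b m \<longleftrightarrow> m \<in> A \<and> rel a m \<and> rel b m \<and>
     (\<forall>c\<in>A. rel a c \<and> rel b c \<longrightarrow> rel m c)"

definition lattice_order_on :: "'a set \<Rightarrow> ('a \<Rightarrow> 'a \<Rightarrow> bool) \<Rightarrow> bool" where
  "lattice_order_on A rel \<longleftrightarrow>
     (\<forall>a\<in>A. rel a a) \<and>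
     (\<forall>a\<in>A. \<forall>b\<in>A. rel a b \<and> rel b a \<longrightarrow> a = b) \<and>
     (\<forall>a\<in>A. \<forall>b\<in>A. \<forall>c\<in>A. rel a b \<and> rel b c \<longrightarrow> rel a c) \<and>
     (\<forall>a\<in>A. \<forall>b\<in>A. (\<exists>m. is_glb_on A rel a b m) \<and> (\<exists>m. is_lub_on A rel a b m))"

definition meetL :: "('a, 'b) monoid_scheme \<Rightarrow> 'a set \<Rightarrow> 'a \<Rightarrow> 'a \<Rightarrow> 'a" where
  "meetL G P a b = (THE m. is_glb_on (carrier G) (leL G P) a b m)"

definition meetR :: "('a, 'b) monoid_scheme \<Rightarrow> 'a set \<Rightarrow> 'a \<Rightarrow> 'a \<Rightarrow> 'a" where
  "meetR G P a b = (THE m. is_glb_on (carrier G) (leR G P) a b m)"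

definition listprod :: "('a, 'b) monoid_scheme \<Rightarrow> 'a list \<Rightarrow> 'a" where
  "listprod G xs = foldr (\<lambda>x y. x \<otimes>\<^bsub>G\<^esub> y) xs \<one>\<^bsub>G\<^esub>"

definition simples :: "('a, 'b) monoid_scheme \<Rightarrow> 'a set \<Rightarrow> 'a \<Rightarrow> 'a set" where
  "simples G P \<Delta> = {a \<in> carrier G. leL G P \<one>\<^bsub>G\<^esub> a \<and> leL G P a \<Delta>}"

definition garside_structure :: "('a, 'b) monoid_scheme \<Rightarrow> 'a set \<Rightarrow> 'a \<Rightarrow> bool" where
  "garside_structure G P \<Delta> \<longleftrightarrow>
     group G \<and> P \<subseteq> carrier G \<and> \<one>\<^bsub>G\<^esub> \<in> P \<and>
     (\<forall>x\<in>P. \<forall>y\<in>P. x \<otimes>\<^bsub>G\<^esub> y \<in> P) \<and>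
     {x \<in> P. inv\<^bsub>G\<^esub> x \<in> P} = {\<one>\<^bsub>G\<^esub>} \<and>
     \<Delta> \<in> P \<and>
     lattice_order_on (carrier G) (leL G P) \<and>
     P = {listprod G xs | xs. set xs \<subseteq> simples G P \<Delta>} \<and>
     (\<lambda>x. inv\<^bsub>G\<^esub> \<Delta> \<otimes>\<^bsub>G\<^esub> x \<otimes>\<^bsub>G\<^esub> \<Delta>) ` P = P \<and>
     (\<forall>x \<in> P - {\<one>\<^bsub>G\<^esub>}. \<exists>N::nat. \<forall>xs. set xs \<subseteq> P - {\<one>\<^bsub>G\<^esub>} \<and> listprod G xs = x
         \<longrightarrow> length xs \<le> N)"

definition garside_finite_type :: "('a, 'b) monoid_scheme \<Rightarrow> 'a set \<Rightarrow> 'a \<Rightarrow> bool" where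
  "garside_finite_type G P \<Delta> \<longleftrightarrow> garside_structure G P \<Delta> \<and> finite (simples G P \<Delta>)"

definition simplicial_complex :: "'v set set \<Rightarrow> bool" where
  "simplicial_complex X \<longleftrightarrow>
     (\<forall>\<sigma>\<in>X. finite \<sigma> \<and> \<sigma> \<noteq> {} \<and> (\<forall>\<tau>. \<tau> \<subseteq> \<sigma> \<and> \<tau> \<noteq> {} \<longrightarrow> \<tau> \<in> X))"

definition verts :: "'v set set \<Rightarrow> 'v set" where
  "verts X = \<Union>X"

definition is_edge :: "'v set set \<Rightarrow> 'v \<Rightarrow> 'v \<Rightarrow> bool" where
  "is_edge X u v \<longleftrightarrow> u \<noteq> v \<and> {u, v} \<in> X"

text \<open>Edge paths: nonempty vertex lists whose consecutive entries are equal or adjacent.\<close>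
definition edge_path :: "'v set set \<Rightarrow> 'v list \<Rightarrow> bool" where
  "edge_path X p \<longleftrightarrow> p \<noteq> [] \<and> set p \<subseteq> verts X \<and>
     (\<forall>i. Suc i < length p \<longrightarrow> {p ! i, p ! Suc i} \<in> X)"

definition connected_complex :: "'v set set \<Rightarrow> bool" where
  "connected_complex X \<longleftrightarrow> verts X \<noteq> {} \<and>
     (\<forall>u\<in>verts X. \<forall>v\<in>verts X. \<exists>p. edge_path X p \<and> hd p = u \<and> last p = v)"

inductive path_move :: "'v set set \<Rightarrow> 'v list \<Rightarrow> 'v list \<Rightarrow> bool" for X where
  stutter: "path_move X (xs @ [u, u] @ ys) (xs @ [u] @ ys)"
| triangle: "{u, v, w} \<in> X \<Longrightarrow> path_move X (xs @ [u, v, w] @ ys) (xs @ [u, w] @ ys)"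

definition path_equiv :: "'v set set \<Rightarrow> 'v list \<Rightarrow> 'v list \<Rightarrow> bool" where
  "path_equiv X = (\<lambda>p q. path_move X p q \<or> path_move X q p)\<^sup>*\<^sup>*"

definition simply_connected_complex :: "'v set set \<Rightarrow> bool" where
  "simply_connected_complex X \<longleftrightarrow> connected_complex X \<and>
     (\<forall>p. edge_path X p \<and> hd p = last p \<longrightarrow> path_equiv X p [hd p])"

definition link :: "'v set set \<Rightarrow> 'v \<Rightarrow> 'v set set" where
  "link X v = {\<tau> \<in> X. v \<notin> \<tau> \<and> insert v \<tau> \<in> X}"

definition flag_complex_prop :: "'v set set \<Rightarrow> bool" where
  "flag_complex_prop X \<longleftrightarrow>
     (\<forall>\<sigma>. finite \<sigma> \<and> \<sigma> \<noteq> {} \<and> \<sigma> \<subseteq> verts X \<and>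
        (\<forall>u\<in>\<sigma>. \<forall>v\<in>\<sigma>. u \<noteq> v \<longrightarrow> is_edge X u v) \<longrightarrow> \<sigma> \<in> X)"

definition six_large :: "'v set set \<Rightarrow> bool" where
  "six_large X \<longleftrightarrow>
     (\<forall>k\<in>{4, 5::nat}. \<forall>c::nat \<Rightarrow> 'v.
        inj_on c {..<k} \<and> (\<forall>i<k. is_edge X (c i) (c ((i + 1) mod k))) \<longrightarrow>
        (\<exists>i<k. \<exists>j<k. j \<noteq> (i + 1) mod k \<and> i \<noteq> (j + 1) mod k \<and> i \<noteq> j \<and>
            is_edge X (c i) (c j)))"

definition systolic_complex :: "'v set set \<Rightarrow> bool" where
  "systolic_complex X \<longleftrightarrow> simplicial_complex X \<and> connected_complex X \<and>
     simply_connected_complex X \<and>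
     (\<forall>v\<in>verts X. flag_complex_prop (link X v) \<and> six_large (link X v))"

definition cayley_adj :: "('a, 'b) monoid_scheme \<Rightarrow> 'a set \<Rightarrow> 'a \<Rightarrow> 'a \<Rightarrow> bool" where
  "cayley_adj G S g h \<longleftrightarrow> (\<exists>s\<in>S. h = g \<otimes>\<^bsub>G\<^esub> s \<or> g = h \<otimes>\<^bsub>G\<^esub> s)"

definition Flag :: "('a, 'b) monoid_scheme \<Rightarrow> 'a set \<Rightarrow> 'a set set" where
  "Flag G S = {\<sigma>. finite \<sigma> \<and> \<sigma> \<noteq> {} \<and> \<sigma> \<subseteq> carrier G \<and>
      (\<forall>g\<in>\<sigma>. \<forall>h\<in>\<sigma>. g \<noteq> h \<longrightarrow> cayley_adj G S g h)}"

definition geometric_simplicial_action ::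
  "('a, 'b) monoid_scheme \<Rightarrow> 'v set set \<Rightarrow> ('a \<Rightarrow> 'v \<Rightarrow> 'v) \<Rightarrow> bool" where
  "geometric_simplicial_action G X \<phi> \<longleftrightarrow>
     group_action G (verts X) \<phi> \<and>
     (\<forall>g\<in>carrier G. \<forall>\<sigma>\<in>X. \<phi> g ` \<sigma> \<in> X) \<and>
     (\<forall>F. finite F \<and> F \<subseteq> verts X \<longrightarrow> finite {g \<in> carrier G. \<phi> g ` F \<inter> F \<noteq> {}}) \<and>
     (\<exists>K. finite K \<and> K \<subseteq> X \<and> (\<forall>\<sigma>\<in>X. \<exists>g\<in>carrier G. \<exists>\<tau>\<in>K. \<sigma> \<subseteq> \<phi> g ` \<tau>))"

definition systolic_group_typ :: "('a, 'b) monoid_scheme \<Rightarrow> 'v itself \<Rightarrow> bool" where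
  "systolic_group_typ G (_ :: 'v itself) \<longleftrightarrow>
     (\<exists>(X :: 'v set set) \<phi>. systolic_complex X \<and> geometric_simplicial_action G X \<phi>)"

abbreviation systolic_group :: "('a, 'b) monoid_scheme \<Rightarrow> bool" where
  "systolic_group G \<equiv> systolic_group_typ G TYPE(nat)"

end

theory Submission
  imports Defs "HOL-Library.Countable_Set"
begin


lemma successively_nth:
  "(\<forall>i. Suc i < length p \<longrightarrow> R (p!i) (p!Suc i)) \<longleftrightarrow> successively R p"
proof (induction p rule: induct_list012)
  case (3 x y zs)
  have "(\<forall>i. Suc i < length (x#y#zs) \<longrightarrow> R ((x#y#zs)!i) ((x#y#zs)!Suc i)) \<longleftrightarrow>
        R x y \<and> (\<forall>i. Suc i < length (y#zs) \<longrightarrow> R ((y#zs)!i) ((y#zs)!Suc i))"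
    apply (rule iffI)
     apply (intro conjI allI impI)
      apply (drule spec[of _ 0], simp)
     apply (drule_tac x="Suc i" in spec, simp)
    apply (intro allI impI)
    apply (case_tac i, auto)
    done
  then show ?case using 3 by simp
qed auto

locale gar =
  fixes G (structure) and P :: "'a set" and D :: 'a
  assumes gs: "garside_structure G P D"
begin

lemma grp: "group G" using gs unfolding garside_structure_def by blast

sublocale group G by (rule grp)

lemma Psub: "P \<subseteq> carrier G" using gs unfolding garside_structure_def by blast
lemma oneP: "\<one> \<in> P" using gs unfolding garside_structure_def by blast
lemma multP: "x \<in> P \<Longrightarrow> y \<in> P \<Longrightarrow> x \<otimes> y \<in> P" using gs unfolding garside_structure_def by blast
lemma DP: "D \<in> P" using gs unfolding garside_structure_def by blast
lemma latt: "lattice_order_on (carrier G) (leL G P)" using gs unfolding garside_structure_def by blast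
lemma Pgen: "P = {listprod G xs | xs. set xs \<subseteq> simples G P D}" using gs unfolding garside_structure_def by blast
lemma conjP: "(\<lambda>x. inv D \<otimes> x \<otimes> D) ` P = P" using gs unfolding garside_structure_def by blast
lemma bnd: "x \<in> P - {\<one>} \<Longrightarrow> \<exists>N::nat. \<forall>xs. set xs \<subseteq> P - {\<one>} \<and> listprod G xs = x \<longrightarrow> length xs \<le> N"
  using gs unfolding garside_structure_def by blast

lemma PinvP: "x \<in> P \<Longrightarrow> inv x \<in> P \<Longrightarrow> x = \<one>"
proof -
  assume "x \<in> P" "inv x \<in> P"
  hence "x \<in> {x \<in> P. inv x \<in> P}" by blast
  thus ?thesis using gs unfolding garside_structure_def by blast
qed

lemma PC[simp]: "x \<in> P \<Longrightarrow> x \<in> carrier G" using Psub by blast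
lemma DC[simp]: "D \<in> carrier G" using DP by simp

lemma conj_iff: "x \<in> carrier G \<Longrightarrow> inv D \<otimes> x \<otimes> D \<in> P \<longleftrightarrow> x \<in> P"
proof
  assume x: "x \<in> carrier G" and "inv D \<otimes> x \<otimes> D \<in> P"
  then obtain y where y: "y \<in> P" "inv D \<otimes> x \<otimes> D = inv D \<otimes> y \<otimes> D" using conjP by force
  hence "x = y" using x by (simp add: m_assoc)
  thus "x \<in> P" using y by simp
next
  assume "x \<in> P" thus "inv D \<otimes> x \<otimes> D \<in> P" using conjP by blast
qed

lemma conj_iff2: "x \<in> carrier G \<Longrightarrow> D \<otimes> x \<otimes> inv D \<in> P \<longleftrightarrow> x \<in> P"
proof -
  assume x: "x \<in> carrier G"
  have "inv D \<otimes> (D \<otimes> x \<otimes> inv D) \<otimes> D = x" using x by (simp add: m_assoc[symmetric]) (simp add: m_assoc)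
  thus ?thesis using conj_iff[of "D \<otimes> x \<otimes> inv D"] x by simp
qed

abbreviation le (infix "\<preceq>" 50) where "a \<preceq> b \<equiv> leL G P a b"

lemma le_def: "a \<preceq> b \<longleftrightarrow> inv a \<otimes> b \<in> P" by (simp add: leL_def)

lemma le_refl: "a \<in> carrier G \<Longrightarrow> a \<preceq> a" by (simp add: le_def oneP)
lemma le_antisym: "a \<in> carrier G \<Longrightarrow> b \<in> carrier G \<Longrightarrow> a \<preceq> b \<Longrightarrow> b \<preceq> a \<Longrightarrow> a = b"
proof -
  assume c: "a \<in> carrier G" "b \<in> carrier G" and "a \<preceq> b" "b \<preceq> a"
  hence "inv a \<otimes> b \<in> P" "inv (inv a \<otimes> b) \<in> P" using c by (auto simp: le_def inv_mult_group)
  hence "inv a \<otimes> b = \<one>" by (rule PinvP)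
  thus ?thesis using c by (metis inv_equality inv_inv inv_closed)
qed
lemma le_trans: "a \<in> carrier G \<Longrightarrow> b \<in> carrier G \<Longrightarrow> c \<in> carrier G \<Longrightarrow> a \<preceq> b \<Longrightarrow> b \<preceq> c \<Longrightarrow> a \<preceq> c"
proof -
  assume c: "a \<in> carrier G" "b \<in> carrier G" "c \<in> carrier G" and "a \<preceq> b" "b \<preceq> c"
  hence "(inv a \<otimes> b) \<otimes> (inv b \<otimes> c) \<in> P" by (simp add: le_def multP)
  also have "(inv a \<otimes> b) \<otimes> (inv b \<otimes> c) = inv a \<otimes> c" using c
    by (simp add: m_assoc[symmetric]) (simp add: m_assoc)
  finally show ?thesis by (simp add: le_def)
qed

lemma le_lmult: "g \<in> carrier G \<Longrightarrow> a \<in> carrier G \<Longrightarrow> b \<in> carrier G \<Longrightarrow> (g \<otimes> a \<preceq> g \<otimes> b) \<longleftrightarrow> a \<preceq> b"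
proof -
  assume c: "g \<in> carrier G" "a \<in> carrier G" "b \<in> carrier G"
  have "inv (g \<otimes> a) \<otimes> (g \<otimes> b) = inv a \<otimes> b" using c
    by (simp add: inv_mult_group m_assoc[symmetric]) (simp add: m_assoc)
  thus ?thesis by (simp add: le_def)
qed

lemma le_rmultD: "a \<in> carrier G \<Longrightarrow> b \<in> carrier G \<Longrightarrow> (a \<otimes> D \<preceq> b \<otimes> D) \<longleftrightarrow> a \<preceq> b"
proof -
  assume c: "a \<in> carrier G" "b \<in> carrier G"
  have "inv (a \<otimes> D) \<otimes> (b \<otimes> D) = inv D \<otimes> (inv a \<otimes> b) \<otimes> D" using c
    by (simp add: inv_mult_group m_assoc)
  thus ?thesis using c conj_iff[of "inv a \<otimes> b"] by (simp add: le_def)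
qed

lemma le_one_iff: "b \<in> carrier G \<Longrightarrow> \<one> \<preceq> b \<longleftrightarrow> b \<in> P" by (simp add: le_def)
lemma le_to_one_iff: "b \<in> carrier G \<Longrightarrow> b \<preceq> \<one> \<longleftrightarrow> inv b \<in> P" by (simp add: le_def)

lemma glb_ex: "a \<in> carrier G \<Longrightarrow> b \<in> carrier G \<Longrightarrow> \<exists>m. is_glb_on (carrier G) (leL G P) a b m"
  using latt unfolding lattice_order_on_def by blast
lemma lub_ex: "a \<in> carrier G \<Longrightarrow> b \<in> carrier G \<Longrightarrow> \<exists>m. is_lub_on (carrier G) (leL G P) a b m"
  using latt unfolding lattice_order_on_def by blast

lemma meet_eq: "a \<in> carrier G \<Longrightarrow> b \<in> carrier G \<Longrightarrow> is_glb_on (carrier G) (leL G P) a b m \<Longrightarrow> meetL G P a b = m"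
  unfolding meetL_def
  apply (rule the_equality, assumption)
  unfolding is_glb_on_def using le_antisym by blast

lemma meet_glb: "a \<in> carrier G \<Longrightarrow> b \<in> carrier G \<Longrightarrow> is_glb_on (carrier G) (leL G P) a b (meetL G P a b)"
  using glb_ex meet_eq by metis

definition meet where "meet a b = meetL G P a b"
definition join where "join a b = (THE m. is_lub_on (carrier G) (leL G P) a b m)"

lemma join_lub: "a \<in> carrier G \<Longrightarrow> b \<in> carrier G \<Longrightarrow> is_lub_on (carrier G) (leL G P) a b (join a b)"
proof -
  assume c: "a \<in> carrier G" "b \<in> carrier G"
  then obtain m where m: "is_lub_on (carrier G) (leL G P) a b m" using lub_ex by blast
  have "join a b = m" unfolding join_def
    apply (rule the_equality, rule m)
    using m unfolding is_lub_on_def using le_antisym by blast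
  thus ?thesis using m by simp
qed

lemma meetC[simp]: "a \<in> carrier G \<Longrightarrow> b \<in> carrier G \<Longrightarrow> meet a b \<in> carrier G"
  using meet_glb unfolding meet_def is_glb_on_def by blast
lemma meet_le1: "a \<in> carrier G \<Longrightarrow> b \<in> carrier G \<Longrightarrow> meet a b \<preceq> a"
  using meet_glb unfolding meet_def is_glb_on_def by blast
lemma meet_le2: "a \<in> carrier G \<Longrightarrow> b \<in> carrier G \<Longrightarrow> meet a b \<preceq> b"
  using meet_glb unfolding meet_def is_glb_on_def by blast
lemma meet_gr: "a \<in> carrier G \<Longrightarrow> b \<in> carrier G \<Longrightarrow> c \<in> carrier G \<Longrightarrow> c \<preceq> a \<Longrightarrow> c \<preceq> b \<Longrightarrow> c \<preceq> meet a b"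
  using meet_glb unfolding meet_def is_glb_on_def by blast
lemma joinC[simp]: "a \<in> carrier G \<Longrightarrow> b \<in> carrier G \<Longrightarrow> join a b \<in> carrier G"
  using join_lub unfolding is_lub_on_def by blast
lemma join_ge1: "a \<in> carrier G \<Longrightarrow> b \<in> carrier G \<Longrightarrow> a \<preceq> join a b"
  using join_lub unfolding is_lub_on_def by blast
lemma join_ge2: "a \<in> carrier G \<Longrightarrow> b \<in> carrier G \<Longrightarrow> b \<preceq> join a b"
  using join_lub unfolding is_lub_on_def by blast

lemma leR_iff: "a \<in> carrier G \<Longrightarrow> b \<in> carrier G \<Longrightarrow> leR G P a b \<longleftrightarrow> inv b \<preceq> inv a"
  by (simp add: leR_def le_def)

lemma leR_antisym: "a \<in> carrier G \<Longrightarrow> b \<in> carrier G \<Longrightarrow> leR G P a b \<Longrightarrow> leR G P b a \<Longrightarrow> a = b"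
  using leR_iff le_antisym by (metis inv_closed inv_inv)

lemma meetR_glb: "a \<in> carrier G \<Longrightarrow> b \<in> carrier G \<Longrightarrow> is_glb_on (carrier G) (leR G P) a b (meetR G P a b)"
proof -
  assume c: "a \<in> carrier G" "b \<in> carrier G"
  define j where "j = join (inv a) (inv b)"
  have jc: "j \<in> carrier G" using c by (simp add: j_def)
  have g: "is_glb_on (carrier G) (leR G P) a b (inv j)"
    unfolding is_glb_on_def
  proof (intro conjI ballI impI)
    show "inv j \<in> carrier G" using jc by simp
    show "leR G P (inv j) a" using c jc by (simp add: leR_iff j_def join_ge1)
    show "leR G P (inv j) b" using c jc by (simp add: leR_iff j_def join_ge2)
    fix x assume x: "x \<in> carrier G" and "leR G P x a \<and> leR G P x b"
    hence "inv a \<preceq> inv x" "inv b \<preceq> inv x" using c by (auto simp: leR_iff)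
    hence "j \<preceq> inv x" using join_lub[of "inv a" "inv b"] c x unfolding is_lub_on_def j_def by auto
    thus "leR G P x (inv j)" using x jc by (simp add: leR_iff)
  qed
  have "meetR G P a b = inv j" unfolding meetR_def
    apply (rule the_equality, rule g)
    using g unfolding is_glb_on_def using leR_antisym by blast
  thus ?thesis using g by simp
qed

lemma leR_le_one: "b \<in> carrier G \<Longrightarrow> leR G P \<one> b \<longleftrightarrow> b \<in> P"
  by (simp add: leR_def)
lemma leR_to_one: "b \<in> carrier G \<Longrightarrow> leR G P b \<one> \<longleftrightarrow> inv b \<in> P"
  by (simp add: leR_def)

lemma simples_iff: "x \<in> simples G P D \<longleftrightarrow> x \<in> P \<and> x \<preceq> D"
  unfolding simples_def using le_one_iff by auto

lemma x_le_xD: "x \<in> carrier G \<Longrightarrow> x \<preceq> x \<otimes> D"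
  by (simp add: le_def m_assoc[symmetric] DP)
lemma D_le_xD: "x \<in> P \<Longrightarrow> D \<preceq> x \<otimes> D"
  using conj_iff[of x] by (simp add: le_def m_assoc)

lemma P_not_le_one: "x \<in> P \<Longrightarrow> x \<preceq> \<one> \<Longrightarrow> x = \<one>"
  using le_to_one_iff PinvP by simp

lemma one_simple: "\<one> \<in> simples G P D"
  by (simp add: simples_iff oneP le_one_iff DP)
lemma D_simple: "D \<in> simples G P D"
  by (simp add: simples_iff DP le_refl)

definition del where "del x = inv x \<otimes> D"

lemma del_simple: "x \<in> simples G P D \<Longrightarrow> del x \<in> simples G P D"
proof -
  assume x: "x \<in> simples G P D"
  hence xP: "x \<in> P" "x \<preceq> D" by (auto simp: simples_iff)
  have "del x \<in> P" using xP by (simp add: del_def le_def)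
  moreover have "inv (del x) \<otimes> D = inv D \<otimes> x \<otimes> D" using xP
    by (simp add: del_def inv_mult_group m_assoc)
  hence "del x \<preceq> D" using conj_iff[of x] xP by (simp add: le_def)
  ultimately show ?thesis by (simp add: simples_iff)
qed

lemma delC[simp]: "x \<in> carrier G \<Longrightarrow> del x \<in> carrier G" by (simp add: del_def)

lemma del_one_iff: "x \<in> carrier G \<Longrightarrow> del x = \<one> \<longleftrightarrow> x = D"
  unfolding del_def by (metis DC inv_closed inv_equality l_inv r_inv m_assoc inv_inv)

lemma listprod_Cons[simp]: "listprod G (x#xs) = x \<otimes> listprod G xs"
  by (simp add: listprod_def)
lemma listprod_Nil[simp]: "listprod G [] = \<one>"
  by (simp add: listprod_def)
lemma listprod_P: "set xs \<subseteq> P \<Longrightarrow> listprod G xs \<in> P"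
  by (induction xs) (auto simp: oneP multP)

lemma simples_P: "simples G P D \<subseteq> P" by (auto simp: simples_iff)

lemma first_simple: "x \<in> P \<Longrightarrow> x \<noteq> \<one> \<Longrightarrow> \<exists>s \<in> simples G P D. s \<noteq> \<one> \<and> s \<preceq> x"
proof -
  assume "x \<in> P" "x \<noteq> \<one>"
  then obtain xs where xs: "set xs \<subseteq> simples G P D" "x = listprod G xs" using Pgen by blast
  have "set xs \<subseteq> simples G P D \<Longrightarrow> listprod G xs \<noteq> \<one> \<Longrightarrow> \<exists>s \<in> simples G P D. s \<noteq> \<one> \<and> s \<preceq> listprod G xs"
  proof (induction xs)
    case (Cons y ys)
    have yP: "y \<in> P" and ysP: "listprod G ys \<in> P" using Cons.prems simples_P listprod_P[of ys] by auto
    show ?case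
    proof (cases "y = \<one>")
      case True thus ?thesis using Cons ysP by simp
    next
      case False
      have "inv y \<otimes> (y \<otimes> listprod G ys) = listprod G ys" using yP ysP by (simp add: m_assoc[symmetric])
      hence "y \<preceq> listprod G (y#ys)" using ysP by (simp add: le_def)
      thus ?thesis using False Cons.prems by auto
    qed
  qed simp
  thus ?thesis using xs \<open>x \<noteq> \<one>\<close> by simp
qed

lemma listprod_nonone: "set xs \<subseteq> P - {\<one>} \<Longrightarrow> xs \<noteq> [] \<Longrightarrow> listprod G xs \<noteq> \<one>"
proof (cases xs)
  case (Cons y ys)
  assume a: "set xs \<subseteq> P - {\<one>}"
  hence yP: "y \<in> P" "y \<noteq> \<one>" and r: "listprod G ys \<in> P" using Cons listprod_P[of ys] by auto
  show ?thesis
  proof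
    assume "listprod G xs = \<one>"
    hence "y \<otimes> listprod G ys = \<one>" using Cons by simp
    hence "inv y = listprod G ys" using yP r by (metis PC inv_equality inv_inv inv_closed r_inv)
    hence "inv y \<in> P" using r by simp
    thus False using yP PinvP by blast
  qed
qed simp

definition len where
  "len x = (GREATEST n. \<exists>xs. set xs \<subseteq> P - {\<one>} \<and> listprod G xs = x \<and> length xs = n)"

lemma len_bound: "x \<in> P \<Longrightarrow> \<exists>N. \<forall>xs. set xs \<subseteq> P - {\<one>} \<and> listprod G xs = x \<longrightarrow> length xs \<le> N"
proof (cases "x = \<one>")
  case True
  show ?thesis using listprod_nonone True by (intro exI[of _ 0]) auto
qed (use bnd in auto)

lemma len_attained: "x \<in> P \<Longrightarrow> \<exists>xs. set xs \<subseteq> P - {\<one>} \<and> listprod G xs = x \<and> length xs = len x"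
proof -
  assume x: "x \<in> P"
  obtain N where N: "\<forall>xs. set xs \<subseteq> P - {\<one>} \<and> listprod G xs = x \<longrightarrow> length xs \<le> N" using len_bound x by blast
  have ex: "\<exists>xs. set xs \<subseteq> P - {\<one>} \<and> listprod G xs = x \<and> length xs = (if x = \<one> then 0 else 1)"
    using x by (cases "x = \<one>") (auto intro: exI[of _ "[x]"])
  show ?thesis unfolding len_def
    apply (rule GreatestI_nat[where k="if x = \<one> then 0 else 1" and b=N])
    using ex N by auto
qed

lemma len_ge: "x \<in> P \<Longrightarrow> set xs \<subseteq> P - {\<one>} \<Longrightarrow> listprod G xs = x \<Longrightarrow> length xs \<le> len x"
proof -
  assume x: "x \<in> P" and xs: "set xs \<subseteq> P - {\<one>}" "listprod G xs = x"
  obtain N where N: "\<forall>xs. set xs \<subseteq> P - {\<one>} \<and> listprod G xs = x \<longrightarrow> length xs \<le> N" using len_bound x by blast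
  show ?thesis unfolding len_def
    apply (rule Greatest_le_nat[where b=N])
    using xs N by auto
qed

lemma len_less: "t \<in> P \<Longrightarrow> t \<noteq> \<one> \<Longrightarrow> y \<in> P \<Longrightarrow> len y < len (t \<otimes> y)"
proof -
  assume t: "t \<in> P" "t \<noteq> \<one>" and y: "y \<in> P"
  obtain ys where ys: "set ys \<subseteq> P - {\<one>}" "listprod G ys = y" "length ys = len y" using len_attained y by blast
  have "length (t#ys) \<le> len (t \<otimes> y)" using ys t y by (intro len_ge) (auto simp: multP)
  thus ?thesis using ys by simp
qed

lemma len_zero: "x \<in> P \<Longrightarrow> len x = 0 \<longleftrightarrow> x = \<one>"
proof
  assume x: "x \<in> P" and "len x = 0"
  then obtain xs where "set xs \<subseteq> P - {\<one>}" "listprod G xs = x" "length xs = 0" using len_attained by metis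
  thus "x = \<one>" by simp
next
  assume x: "x \<in> P" and "x = \<one>"
  obtain xs where xs: "set xs \<subseteq> P - {\<one>}" "listprod G xs = x" "length xs = len x" using len_attained x by blast
  thus "len x = 0" using listprod_nonone \<open>x = \<one>\<close> by fastforce
qed

definition SS where "SS = simples G P D - {\<one>}"

definition adj where "adj g h \<longleftrightarrow> g \<in> carrier G \<and> h \<in> carrier G \<and>
   (g = h \<or> inv g \<otimes> h \<in> SS \<or> inv h \<otimes> g \<in> SS)"

definition close where "close g h \<longleftrightarrow> g \<preceq> h \<and> h \<preceq> g \<otimes> D"

abbreviation X where "X \<equiv> Flag G SS"

lemma SS_P: "x \<in> SS \<Longrightarrow> x \<in> P" using simples_P SS_def by auto
lemma SSC[simp]: "x \<in> SS \<Longrightarrow> x \<in> carrier G" using SS_P by simp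

lemma cayley_iff: "g \<in> carrier G \<Longrightarrow> h \<in> carrier G \<Longrightarrow>
   cayley_adj G SS g h \<longleftrightarrow> inv g \<otimes> h \<in> SS \<or> inv h \<otimes> g \<in> SS"
proof -
  assume c: "g \<in> carrier G" "h \<in> carrier G"
  have e: "s \<in> carrier G \<Longrightarrow> (h = g \<otimes> s) \<longleftrightarrow> s = inv g \<otimes> h" for s
  proof
    assume "s \<in> carrier G" "h = g \<otimes> s"
    thus "s = inv g \<otimes> h" using c by (simp add: m_assoc[symmetric])
  next
    assume "s \<in> carrier G" "s = inv g \<otimes> h"
    thus "h = g \<otimes> s" using c by (simp add: m_assoc[symmetric])
  qed
  have e2: "s \<in> carrier G \<Longrightarrow> (g = h \<otimes> s) \<longleftrightarrow> s = inv h \<otimes> g" for s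
  proof
    assume "s \<in> carrier G" "g = h \<otimes> s"
    thus "s = inv h \<otimes> g" using c by (simp add: m_assoc[symmetric])
  next
    assume "s \<in> carrier G" "s = inv h \<otimes> g"
    thus "g = h \<otimes> s" using c by (simp add: m_assoc[symmetric])
  qed
  have "cayley_adj G SS g h \<longleftrightarrow> (\<exists>s\<in>SS. s = inv g \<otimes> h \<or> s = inv h \<otimes> g)"
    unfolding cayley_adj_def using e e2 SSC by (meson)
  thus ?thesis by blast
qed

lemma adj_sym: "adj g h \<Longrightarrow> adj h g" unfolding adj_def by auto
lemma adj_refl: "g \<in> carrier G \<Longrightarrow> adj g g" unfolding adj_def by auto
lemma adjC: "adj g h \<Longrightarrow> g \<in> carrier G" "adj g h \<Longrightarrow> h \<in> carrier G" unfolding adj_def by auto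

lemma Flag_iff: "\<sigma> \<in> X \<longleftrightarrow> finite \<sigma> \<and> \<sigma> \<noteq> {} \<and> \<sigma> \<subseteq> carrier G \<and> (\<forall>g\<in>\<sigma>. \<forall>h\<in>\<sigma>. adj g h)"
  unfolding Flag_def adj_def using cayley_iff by blast

lemma pair_Flag: "{g, h} \<in> X \<longleftrightarrow> adj g h"
  unfolding Flag_iff using adjC adj_sym adj_refl by auto

lemma single_Flag: "{g} \<in> X \<longleftrightarrow> g \<in> carrier G"
  unfolding Flag_iff using adj_refl by auto

lemma triple_Flag: "{u, v, w} \<in> X \<longleftrightarrow> adj u v \<and> adj v w \<and> adj u w"
  unfolding Flag_iff using adjC adj_sym adj_refl by auto

lemma verts_X: "verts X = carrier G"
  unfolding verts_def using single_Flag Flag_iff by blast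

lemma close_adj: "g \<in> carrier G \<Longrightarrow> h \<in> carrier G \<Longrightarrow> close g h \<Longrightarrow> adj g h"
proof -
  assume c: "g \<in> carrier G" "h \<in> carrier G" and cl: "close g h"
  have "inv g \<otimes> h \<in> P" using cl by (simp add: close_def le_def)
  moreover have "inv (inv g \<otimes> h) \<otimes> D = inv h \<otimes> (g \<otimes> D)" using c
    by (simp add: inv_mult_group m_assoc)
  hence "inv g \<otimes> h \<preceq> D" using cl by (simp add: close_def le_def)
  ultimately have "inv g \<otimes> h \<in> simples G P D" by (simp add: simples_iff)
  moreover have "inv g \<otimes> h = \<one> \<Longrightarrow> g = h" using c by (metis inv_equality inv_inv inv_closed)
  ultimately show ?thesis using c unfolding adj_def SS_def by blast
qed

lemma adj_close: "adj g h \<Longrightarrow> close g h \<or> close h g"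
proof -
  assume a: "adj g h"
  hence c: "g \<in> carrier G" "h \<in> carrier G" by (auto simp: adj_def)
  have k: "close x y" if xy: "x \<in> carrier G" "y \<in> carrier G" "inv x \<otimes> y \<in> SS" for x y
  proof -
    have s: "inv x \<otimes> y \<in> P" "inv x \<otimes> y \<preceq> D" using xy by (auto simp: SS_def simples_iff)
    have "inv (inv x \<otimes> y) \<otimes> D = inv y \<otimes> (x \<otimes> D)" using xy
      by (simp add: inv_mult_group m_assoc)
    thus ?thesis using s unfolding close_def le_def by simp
  qed
  show ?thesis using a k c unfolding adj_def close_def by (auto simp: le_refl x_le_xD)
qed

lemma chain3: "x \<in> carrier G \<Longrightarrow> y \<in> carrier G \<Longrightarrow> z \<in> carrier G \<Longrightarrow> x \<preceq> y \<Longrightarrow> y \<preceq> z \<Longrightarrow> z \<preceq> x \<otimes> D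
   \<Longrightarrow> {x, y, z} \<in> X"
proof -
  assume c: "x \<in> carrier G" "y \<in> carrier G" "z \<in> carrier G" and o: "x \<preceq> y" "y \<preceq> z" "z \<preceq> x \<otimes> D"
  have "x \<otimes> D \<preceq> y \<otimes> D" using o c le_rmultD by simp
  hence "z \<preceq> y \<otimes> D" using o c le_trans[of z "x \<otimes> D" "y \<otimes> D"] by simp
  hence a1: "close y z" using o unfolding close_def by simp
  have "x \<preceq> z" using o c le_trans[of x y z] by simp
  hence a2: "close x z" using o unfolding close_def by simp
  have "y \<preceq> x \<otimes> D" using o c le_trans[of y z "x \<otimes> D"] by simp
  hence a3: "close x y" using o unfolding close_def by simp
  show ?thesis unfolding triple_Flag using close_adj a1 a2 a3 c by blast
qed

subsection \<open>Paths\<close>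

lemma path_move_ctx: "path_move X' p q \<Longrightarrow> path_move X' (xs @ p @ ys) (xs @ q @ ys)"
proof (induction rule: path_move.induct)
  case (stutter as u bs)
  show ?case using path_move.stutter[of X' "xs @ as" u "bs @ ys"] by simp
next
  case (triangle u v w as bs)
  show ?case using path_move.triangle[OF triangle, of "xs @ as" "bs @ ys"] by simp
qed

lemma pe_refl: "path_equiv X' p p" unfolding path_equiv_def by simp

lemma pe_trans: "path_equiv X' p q \<Longrightarrow> path_equiv X' q r \<Longrightarrow> path_equiv X' p r"
  unfolding path_equiv_def by (rule rtranclp_trans)

lemma pe_sym: "path_equiv X' p q \<Longrightarrow> path_equiv X' q p"
  unfolding path_equiv_def
proof (induction rule: rtranclp_induct)
  case (step y z)
  have "path_move X' z y \<or> path_move X' y z" using step(2) by blast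
  then show ?case using step(3) by (rule converse_rtranclp_into_rtranclp)
qed simp

lemma pe_ctx: "path_equiv X' p q \<Longrightarrow> path_equiv X' (xs @ p @ ys) (xs @ q @ ys)"
  unfolding path_equiv_def
proof (induction rule: rtranclp_induct)
  case (step y z)
  have "path_move X' (xs @ y @ ys) (xs @ z @ ys) \<or> path_move X' (xs @ z @ ys) (xs @ y @ ys)"
    using step(2) path_move_ctx by blast
  with step(3) show ?case by (rule rtranclp.rtrancl_into_rtrancl)
qed simp

lemma pe_move: "path_move X' p q \<Longrightarrow> path_equiv X' p q"
  unfolding path_equiv_def by auto

lemma pe_stut: "path_equiv X' (xs @ [u, u] @ ys) (xs @ [u] @ ys)"
  by (rule pe_move) (rule path_move.stutter)

lemma pe_tri: "{u, v, w} \<in> X' \<Longrightarrow> path_equiv X' (xs @ [u, v, w] @ ys) (xs @ [u, w] @ ys)"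
  by (rule pe_move) (rule path_move.triangle)

lemma edge_path_iff: "edge_path X p \<longleftrightarrow> p \<noteq> [] \<and> set p \<subseteq> carrier G \<and> successively adj p"
  unfolding edge_path_def verts_X pair_Flag successively_nth by blast

lemma succ_adj_carrier: "successively adj (x # xs) \<Longrightarrow> x \<in> carrier G \<Longrightarrow> set (x # xs) \<subseteq> carrier G"
  by (induction xs arbitrary: x) (auto dest: adjC)

subsection \<open>The retraction phi\<close>

definition phi where "phi h g = meet (g \<otimes> D) h"

context
  fixes h assumes hC: "h \<in> carrier G"
begin

lemma phiC[simp]: "g \<in> carrier G \<Longrightarrow> phi h g \<in> carrier G"
  using hC by (simp add: phi_def)

lemma phi_ge: "g \<in> carrier G \<Longrightarrow> g \<preceq> h \<Longrightarrow> g \<preceq> phi h g"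
  unfolding phi_def using hC x_le_xD meet_gr by simp

lemma phi_le_h: "g \<in> carrier G \<Longrightarrow> phi h g \<preceq> h"
  unfolding phi_def using hC meet_le2 by simp

lemma phi_le_gD: "g \<in> carrier G \<Longrightarrow> phi h g \<preceq> g \<otimes> D"
  unfolding phi_def using hC meet_le1 by simp

lemma close_phi: "g \<in> carrier G \<Longrightarrow> g \<preceq> h \<Longrightarrow> close g (phi h g)"
  unfolding close_def using phi_ge phi_le_gD by simp

lemma adj_phi: "g \<in> carrier G \<Longrightarrow> g \<preceq> h \<Longrightarrow> adj g (phi h g)"
  using close_adj close_phi by simp

lemma phi_hh: "phi h h = h"
proof -
  have "h \<preceq> phi h h" using phi_ge hC le_refl by simp
  moreover have "phi h h \<preceq> h" using phi_le_h hC by simp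
  ultimately show ?thesis using le_antisym hC by simp
qed

lemma phi_step: "g \<in> carrier G \<Longrightarrow> g' \<in> carrier G \<Longrightarrow> close g g' \<Longrightarrow> g' \<preceq> h \<Longrightarrow> g' \<preceq> phi h g"
  unfolding phi_def close_def using hC meet_gr by simp

lemma phi_mono: "g \<in> carrier G \<Longrightarrow> g' \<in> carrier G \<Longrightarrow> close g g' \<Longrightarrow> phi h g \<preceq> phi h g'"
proof -
  assume c: "g \<in> carrier G" "g' \<in> carrier G" "close g g'"
  have "g \<otimes> D \<preceq> g' \<otimes> D" using c le_rmultD by (simp add: close_def)
  hence "phi h g \<preceq> g' \<otimes> D" using c phi_le_gD le_trans[of "phi h g" "g \<otimes> D" "g' \<otimes> D"] by simp
  thus ?thesis unfolding phi_def using c hC meet_gr phi_le_h[of g] by (simp add: phi_def)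
qed

lemma step_pe: "adj g g' \<Longrightarrow> g \<preceq> h \<Longrightarrow> g' \<preceq> h \<Longrightarrow>
   path_equiv X [g, g'] [g, phi h g, phi h g', g'] \<and> adj (phi h g) (phi h g')"
proof -
  assume a: "adj g g'" and gh: "g \<preceq> h" and gh': "g' \<preceq> h"
  have c: "g \<in> carrier G" "g' \<in> carrier G" using a by (auto simp: adj_def)
  from adj_close[OF a] show ?thesis
  proof
    assume cl: "close g g'"
    have o1: "g' \<preceq> phi h g" using phi_step c cl gh' by simp
    have cl': "g \<preceq> g'" using cl by (simp add: close_def)
    have T1: "{g, g', phi h g} \<in> X"
      using chain3[OF c(1) c(2) phiC[OF c(1)] cl' o1 phi_le_gD[OF c(1)]] .
    have T2: "{g', phi h g, phi h g'} \<in> X"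
      using chain3[OF c(2) phiC[OF c(1)] phiC[OF c(2)] o1 phi_mono[OF c(1) c(2) cl] phi_le_gD[OF c(2)]] .
    have T1': "{g, phi h g, g'} \<in> X" using T1 by (simp add: insert_commute)
    have "path_equiv X ([] @ [g, phi h g, g'] @ []) ([] @ [g, g'] @ [])" by (rule pe_tri[OF T1'])
    hence p1: "path_equiv X [g, g'] [g, phi h g, g']" by (simp add: pe_sym)
    have T2': "{phi h g, phi h g', g'} \<in> X" using T2 by (simp add: insert_commute)
    have "path_equiv X ([g] @ [phi h g, phi h g', g'] @ []) ([g] @ [phi h g, g'] @ [])" by (rule pe_tri[OF T2'])
    hence p2: "path_equiv X [g, phi h g, g'] [g, phi h g, phi h g', g']" by (simp add: pe_sym)
    have "adj (phi h g) (phi h g')" using T2 by (simp add: triple_Flag)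
    thus ?thesis using pe_trans[OF p1 p2] by simp
  next
    assume cl: "close g' g"
    have o1: "g \<preceq> phi h g'" using phi_step c cl gh by simp
    have cl': "g' \<preceq> g" using cl by (simp add: close_def)
    have T1: "{g', g, phi h g'} \<in> X"
      using chain3[OF c(2) c(1) phiC[OF c(2)] cl' o1 phi_le_gD[OF c(2)]] .
    have T2: "{g, phi h g', phi h g} \<in> X"
      using chain3[OF c(1) phiC[OF c(2)] phiC[OF c(1)] o1 phi_mono[OF c(2) c(1) cl] phi_le_gD[OF c(1)]] .
    have T1': "{g, phi h g', g'} \<in> X" using T1 by (simp add: insert_commute)
    have "path_equiv X ([] @ [g, phi h g', g'] @ []) ([] @ [g, g'] @ [])" by (rule pe_tri[OF T1'])
    hence p1: "path_equiv X [g, g'] [g, phi h g', g']" by (simp add: pe_sym)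
    have T2': "{g, phi h g, phi h g'} \<in> X" using T2 by (simp add: insert_commute)
    have "path_equiv X ([] @ [g, phi h g, phi h g'] @ [g']) ([] @ [g, phi h g'] @ [g'])" by (rule pe_tri[OF T2'])
    hence p2: "path_equiv X [g, phi h g', g'] [g, phi h g, phi h g', g']" by (simp add: pe_sym)
    have "adj (phi h g) (phi h g')" using T2 by (simp add: triple_Flag adj_sym)
    thus ?thesis using pe_trans[OF p1 p2] by simp
  qed
qed

lemma back_forth: "adj x y \<Longrightarrow> path_equiv X (xs @ [x, y, x] @ ys) (xs @ [x] @ ys)"
proof -
  assume a: "adj x y"
  have "{x, y, x} \<in> X" using a by (simp add: insert_commute pair_Flag)
  hence "path_equiv X (xs @ [x, y, x] @ ys) (xs @ [x, x] @ ys)" by (rule pe_tri)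
  moreover have "path_equiv X (xs @ [x, x] @ ys) (xs @ [x] @ ys)" by (rule pe_stut)
  ultimately show ?thesis by (rule pe_trans)
qed

lemma hom_pe: "successively adj (x # xs) \<Longrightarrow> x \<in> carrier G \<Longrightarrow> (\<forall>v \<in> set (x # xs). v \<preceq> h) \<Longrightarrow>
   path_equiv X (x # xs) (x # map (phi h) (x # xs) @ [last (x # xs)])
   \<and> successively adj (map (phi h) (x # xs))"
proof (induction xs arbitrary: x)
  case Nil
  have "path_equiv X ([] @ [x, phi h x, x] @ []) ([] @ [x] @ [])"
    by (rule back_forth) (use Nil adj_phi in auto)
  thus ?case by (simp add: pe_sym)
next
  case (Cons y ys)
  have a: "adj x y" and sy: "successively adj (y # ys)" using Cons.prems by auto
  have yC: "y \<in> carrier G" using a by (simp add: adj_def)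
  have IH: "path_equiv X (y # ys) (y # map (phi h) (y # ys) @ [last (y # ys)])"
    "successively adj (map (phi h) (y # ys))"
    using Cons.IH[OF sy yC] Cons.prems by auto
  have st: "path_equiv X [x, y] [x, phi h x, phi h y, y]" "adj (phi h x) (phi h y)"
    using step_pe[OF a] Cons.prems by auto
  have s1: "path_equiv X ([] @ [x, y] @ ys) ([] @ [x, phi h x, phi h y, y] @ ys)"
    by (rule pe_ctx) (rule st(1))
  have s2: "path_equiv X ([x, phi h x, phi h y] @ (y # ys) @ [])
      ([x, phi h x, phi h y] @ (y # map (phi h) (y # ys) @ [last (y # ys)]) @ [])"
    by (rule pe_ctx) (rule IH(1))
  have s3: "path_equiv X ([x, phi h x] @ [phi h y, y, phi h y] @ (map (phi h) ys @ [last (y # ys)]))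
       ([x, phi h x] @ [phi h y] @ (map (phi h) ys @ [last (y # ys)]))"
    by (rule back_forth) (rule adj_sym, rule adj_phi, use yC Cons.prems in auto)
  let ?l = "last (y # ys)"
  have s1': "path_equiv X (x # y # ys) (x # phi h x # phi h y # y # ys)" using s1 by simp
  have s2': "path_equiv X (x # phi h x # phi h y # y # ys)
     (x # phi h x # phi h y # y # phi h y # map (phi h) ys @ [?l])" using s2 by simp
  have s3': "path_equiv X (x # phi h x # phi h y # y # phi h y # map (phi h) ys @ [?l])
     (x # phi h x # phi h y # map (phi h) ys @ [?l])" using s3 by simp
  have "path_equiv X (x # y # ys) (x # map (phi h) (x # y # ys) @ [last (x # y # ys)])"
    using pe_trans[OF pe_trans[OF s1' s2'] s3'] by simp
  moreover have "successively adj (map (phi h) (x # y # ys))"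
    using IH(2) st(2) by simp
  ultimately show ?case by blast
qed

lemma phi_ne: "g \<in> carrier G \<Longrightarrow> g \<preceq> h \<Longrightarrow> g \<noteq> h \<Longrightarrow> phi h g \<noteq> g"
proof
  assume c: "g \<in> carrier G" "g \<preceq> h" "g \<noteq> h" and eq: "phi h g = g"
  have x: "inv g \<otimes> h \<in> P" using c by (simp add: le_def)
  have "inv g \<otimes> h \<noteq> \<one>"
  proof
    assume "inv g \<otimes> h = \<one>"
    hence "h = g" using c hC by (metis inv_equality inv_inv inv_closed)
    thus False using c by simp
  qed
  then obtain s where s: "s \<in> simples G P D" "s \<noteq> \<one>" "s \<preceq> inv g \<otimes> h" using first_simple x by blast
  have sP: "s \<in> P" "s \<preceq> D" using s by (auto simp: simples_iff)
  have "g \<otimes> s \<preceq> g \<otimes> (inv g \<otimes> h)" using le_lmult[of g s "inv g \<otimes> h"] c hC sP s by simp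
  hence gs1: "g \<otimes> s \<preceq> h" using c hC by (simp add: m_assoc[symmetric])
  have gs2: "g \<otimes> s \<preceq> g \<otimes> D" using le_lmult[of g s D] c sP by simp
  have "g \<otimes> s \<preceq> phi h g" unfolding phi_def using meet_gr gs1 gs2 c hC sP by simp
  hence "g \<otimes> s \<preceq> g \<otimes> \<one>" using eq c by simp
  hence "s \<preceq> \<one>" using le_lmult[of g s \<one>] c sP by simp
  thus False using P_not_le_one sP s by simp
qed

definition mu where "mu v = len (inv v \<otimes> h)"

lemma mu_dec: "g \<in> carrier G \<Longrightarrow> g \<preceq> h \<Longrightarrow> g \<noteq> h \<Longrightarrow> mu (phi h g) < mu g"
proof -
  assume c: "g \<in> carrier G" "g \<preceq> h" "g \<noteq> h"
  define t where "t = inv g \<otimes> phi h g"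
  define y where "y = inv (phi h g) \<otimes> h"
  have tP: "t \<in> P" using phi_ge c by (simp add: t_def le_def)
  have yP: "y \<in> P" using phi_le_h c by (simp add: y_def le_def)
  have "t \<noteq> \<one>"
  proof
    assume "t = \<one>"
    hence "phi h g = g" using c unfolding t_def by (metis inv_equality inv_inv inv_closed phiC)
    thus False using phi_ne c by simp
  qed
  hence "len y < len (t \<otimes> y)" using len_less tP yP by simp
  moreover have "t \<otimes> y = inv g \<otimes> h" unfolding t_def y_def using c hC
    by (simp add: m_assoc) (simp add: m_assoc[symmetric])
  ultimately show ?thesis by (simp add: mu_def y_def)
qed

lemma mu_h: "mu h = 0"
  using len_zero[of \<one>] oneP hC by (simp add: mu_def)

lemma mu_zero: "g \<in> carrier G \<Longrightarrow> g \<preceq> h \<Longrightarrow> mu g = 0 \<Longrightarrow> g = h"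
proof -
  assume c: "g \<in> carrier G" "g \<preceq> h" "mu g = 0"
  hence "inv g \<otimes> h = \<one>" using len_zero[of "inv g \<otimes> h"] by (simp add: mu_def le_def)
  thus ?thesis using c hC by (metis inv_equality inv_inv inv_closed)
qed

lemma const_loop: "set xs \<subseteq> {h} \<Longrightarrow> path_equiv X (h # xs) [h]"
proof (induction xs)
  case Nil show ?case by (simp add: pe_refl)
next
  case (Cons y ys)
  hence "y = h" by simp
  have "path_equiv X ([] @ [h, h] @ ys) ([] @ [h] @ ys)" by (rule pe_stut)
  thus ?case using Cons \<open>y = h\<close> pe_trans by simp
qed

lemma loop_pe_aux: "\<forall>p. Max (mu ` set p) = n \<longrightarrow> p \<noteq> [] \<longrightarrow> successively adj p \<longrightarrow> set p \<subseteq> carrier G \<longrightarrow>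
   (\<forall>v \<in> set p. v \<preceq> h) \<longrightarrow> last p = hd p \<longrightarrow> path_equiv X p [hd p]"
proof (induction n rule: less_induct)
  case (less n)
  show ?case
  proof (intro allI impI)
    fix p :: "'a list"
    assume M: "Max (mu ` set p) = n" and ne: "p \<noteq> []" and sa: "successively adj p"
      and sc: "set p \<subseteq> carrier G" and le: "\<forall>v \<in> set p. v \<preceq> h" and cl: "last p = hd p"
    obtain x xs where p: "p = x # xs" using ne by (cases p) auto
    show "path_equiv X p [hd p]"
    proof (cases "set p \<subseteq> {h}")
      case True
      hence "x = h" "set xs \<subseteq> {h}" using p by auto
      thus ?thesis using const_loop p by simp
    next
      case False
      then obtain w where w: "w \<in> set p" "w \<noteq> h" by blast
      have "mu w > 0" using mu_zero w sc le by blast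
      moreover have "mu w \<le> Max (mu ` set p)" using w by (intro Max_ge) auto
      ultimately have npos: "n > 0" using M by simp
      define q where "q = map (phi h) p"
      have H: "path_equiv X p (x # q @ [x])" "successively adj q"
        using hom_pe[of x xs] sa le sc p cl by (auto simp: q_def)
      have qne: "q \<noteq> []" using p q_def by simp
      have qsc: "set q \<subseteq> carrier G" using sc by (auto simp: q_def)
      have qle: "\<forall>v \<in> set q. v \<preceq> h" using sc by (auto simp: q_def phi_le_h)
      have qcl: "last q = hd q" using cl ne by (simp add: q_def last_map hd_map)
      have qlt: "Max (mu ` set q) < n"
      proof -
        have "\<forall>v \<in> set p. mu (phi h v) < n"
        proof
          fix v assume v: "v \<in> set p"
          show "mu (phi h v) < n"
          proof (cases "v = h")
            case True thus ?thesis using phi_hh mu_h npos by simp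
          next
            case False
            have "mu (phi h v) < mu v" using mu_dec v sc le False by blast
            moreover have "mu v \<le> Max (mu ` set p)" using v by (intro Max_ge) auto
            ultimately show ?thesis using M by simp
          qed
        qed
        thus ?thesis using qne by (simp add: q_def image_image)
      qed
      have "path_equiv X q [hd q]" using less.IH[OF qlt] qne H(2) qsc qle qcl by blast
      hence "path_equiv X ([x] @ q @ [x]) ([x] @ [hd q] @ [x])" by (rule pe_ctx)
      moreover have "hd q = phi h x" using p q_def by simp
      moreover have "path_equiv X ([] @ [x, phi h x, x] @ []) ([] @ [x] @ [])"
        by (rule back_forth) (rule adj_phi, use p sc le in auto)
      ultimately have "path_equiv X (x # q @ [x]) [x]" using pe_trans by fastforce
      thus ?thesis using H(1) p pe_trans by simp
    qed
  qed
qed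

lemma path_up: "u \<in> carrier G \<Longrightarrow> u \<preceq> h \<Longrightarrow> \<exists>p. p \<noteq> [] \<and> successively adj p \<and> set p \<subseteq> carrier G \<and> hd p = u \<and> last p = h"
proof (induction "mu u" arbitrary: u rule: less_induct)
  case less
  show ?case
  proof (cases "u = h")
    case True thus ?thesis by (intro exI[of _ "[h]"]) (simp add: hC)
  next
    case False
    have "mu (phi h u) < mu u" using mu_dec less.prems False by simp
    then obtain p where p: "p \<noteq> []" "successively adj p" "set p \<subseteq> carrier G" "hd p = phi h u" "last p = h"
      using less.hyps[of "phi h u"] less.prems phi_le_h by auto
    have "successively adj (u # p)" using p adj_phi less.prems by (cases p) auto
    thus ?thesis using p less.prems by (intro exI[of _ "u # p"]) auto
  qed
qed

end

lemma upper_bound: "p \<noteq> [] \<Longrightarrow> set p \<subseteq> carrier G \<Longrightarrow> \<exists>h \<in> carrier G. \<forall>v \<in> set p. v \<preceq> h"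
proof (induction p)
  case (Cons x xs)
  show ?case
  proof (cases "xs = []")
    case True thus ?thesis using Cons le_refl by auto
  next
    case False
    then obtain h where h: "h \<in> carrier G" "\<forall>v \<in> set xs. v \<preceq> h" using Cons by auto
    have xC: "x \<in> carrier G" using Cons by simp
    have "\<forall>v \<in> set (x # xs). v \<preceq> join x h"
    proof
      fix v assume v: "v \<in> set (x # xs)"
      show "v \<preceq> join x h"
      proof (cases "v = x")
        case True thus ?thesis using join_ge1 xC h by simp
      next
        case False
        hence "v \<in> set xs" "v \<in> carrier G" using v Cons by auto
        thus ?thesis using h join_ge2[of x h] xC le_trans[of v h "join x h"] by simp
      qed
    qed
    thus ?thesis using xC h by auto
  qed
qed simp

lemma Flag_simply_connected: "simply_connected_complex X"
  unfolding simply_connected_complex_def connected_complex_def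
proof (intro conjI ballI allI impI)
  show "verts X \<noteq> {}" using verts_X by auto
next
  fix u v assume uv: "u \<in> verts X" "v \<in> verts X"
  hence c: "u \<in> carrier G" "v \<in> carrier G" using verts_X by auto
  define h where "h = join u v"
  have hC: "h \<in> carrier G" using c by (simp add: h_def)
  obtain p where p: "p \<noteq> []" "successively adj p" "set p \<subseteq> carrier G" "hd p = u" "last p = h"
    using path_up[OF hC c(1)] join_ge1 c h_def by auto
  obtain q where q: "q \<noteq> []" "successively adj q" "set q \<subseteq> carrier G" "hd q = v" "last q = h"
    using path_up[OF hC c(2)] join_ge2 c h_def by auto
  have "successively (\<lambda>x y. adj y x) q" using q(2) by (rule successively_mono) (simp add: adj_sym)
  hence "successively adj (p @ rev q)" using p q adj_refl hC
    by (auto simp: successively_append_iff hd_rev)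
  moreover have "hd (p @ rev q) = u" "last (p @ rev q) = v" using p q by (auto simp: last_rev)
  ultimately show "\<exists>p. edge_path X p \<and> hd p = u \<and> last p = v" using p q
    by (intro exI[of _ "p @ rev q"]) (auto simp: edge_path_iff)
next
  fix p assume "edge_path X p \<and> hd p = last p"
  hence p: "p \<noteq> []" "set p \<subseteq> carrier G" "successively adj p" "hd p = last p" by (auto simp: edge_path_iff)
  obtain h where h: "h \<in> carrier G" "\<forall>v \<in> set p. v \<preceq> h" using upper_bound p by blast
  have AA: "\<forall>p. Max (mu h ` set p) = Max (mu h ` set p) \<longrightarrow> p \<noteq> [] \<longrightarrow> successively adj p \<longrightarrow> set p \<subseteq> carrier G \<longrightarrow>
   (\<forall>v \<in> set p. v \<preceq> h) \<longrightarrow> last p = hd p \<longrightarrow> path_equiv X p [hd p]" using loop_pe_aux[OF h(1)] by blast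
  thus "path_equiv X p [hd p]" using spec[OF AA, of p] p h by simp
qed

subsection \<open>Links\<close>

lemma link_pair: "{u, w} \<in> link X g \<longleftrightarrow> u \<noteq> g \<and> w \<noteq> g \<and> adj u w \<and> adj g u \<and> adj g w"
  unfolding link_def using pair_Flag triple_Flag[of g u w] by auto

lemma is_edge_link: "is_edge (link X g) u w \<longleftrightarrow> u \<noteq> w \<and> u \<noteq> g \<and> w \<noteq> g \<and> adj u w \<and> adj g u \<and> adj g w"
  unfolding is_edge_def link_pair by auto

lemma verts_link: "u \<in> verts (link X g) \<Longrightarrow> adj g u \<and> u \<noteq> g"
proof -
  assume "u \<in> verts (link X g)"
  then obtain \<tau> where t: "\<tau> \<in> X" "g \<notin> \<tau>" "insert g \<tau> \<in> X" "u \<in> \<tau>" unfolding verts_def link_def by auto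
  thus ?thesis unfolding Flag_iff by auto
qed

lemma link_flag: "flag_complex_prop (link X g)"
  unfolding flag_complex_prop_def
proof (intro allI impI)
  fix \<sigma> assume a: "finite \<sigma> \<and> \<sigma> \<noteq> {} \<and> \<sigma> \<subseteq> verts (link X g) \<and>
     (\<forall>u\<in>\<sigma>. \<forall>v\<in>\<sigma>. u \<noteq> v \<longrightarrow> is_edge (link X g) u v)"
  have vl: "\<forall>u\<in>\<sigma>. adj g u \<and> u \<noteq> g" using a verts_link by blast
  have pw: "\<forall>u\<in>\<sigma>. \<forall>v\<in>\<sigma>. adj u v"
  proof (intro ballI)
    fix u v assume uv: "u \<in> \<sigma>" "v \<in> \<sigma>"
    show "adj u v"
    proof (cases "u = v")
      case True
      have "adj g u" using vl uv by blast
      hence "u \<in> carrier G" by (rule adjC(2))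
      thus ?thesis using True adj_refl by simp
    next
      case False thus ?thesis using a uv is_edge_link by blast
    qed
  qed
  have sc: "\<sigma> \<subseteq> carrier G" using vl adjC(2) by blast
  obtain u0 where "u0 \<in> \<sigma>" using a by blast
  hence gc: "g \<in> carrier G" using vl adjC(1) by blast
  have "\<sigma> \<in> X" unfolding Flag_iff using a pw sc by simp
  moreover have "\<forall>u\<in>insert g \<sigma>. \<forall>v\<in>insert g \<sigma>. adj u v"
  proof (intro ballI)
    fix u v assume "u \<in> insert g \<sigma>" "v \<in> insert g \<sigma>"
    hence "(u = g \<and> v = g) \<or> (u = g \<and> v \<in> \<sigma>) \<or> (u \<in> \<sigma> \<and> v = g) \<or> (u \<in> \<sigma> \<and> v \<in> \<sigma>)" by blast
    thus "adj u v"
    proof (elim disjE conjE)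
      assume "u = g" "v = g" thus ?thesis using adj_refl[OF gc] by simp
    next
      assume "u = g" "v \<in> \<sigma>" thus ?thesis using vl by simp
    next
      assume "u \<in> \<sigma>" "v = g" thus ?thesis using vl adj_sym by blast
    next
      assume "u \<in> \<sigma>" "v \<in> \<sigma>" thus ?thesis using pw by blast
    qed
  qed
  hence "insert g \<sigma> \<in> X" unfolding Flag_iff using a sc gc by simp
  moreover have "g \<notin> \<sigma>" using vl by blast
  ultimately show "\<sigma> \<in> link X g" unfolding link_def by blast
qed

lemma adj_lmult: "g \<in> carrier G \<Longrightarrow> u \<in> carrier G \<Longrightarrow> w \<in> carrier G \<Longrightarrow> adj (g \<otimes> u) (g \<otimes> w) \<longleftrightarrow> adj u w"
proof -
  assume c: "g \<in> carrier G" "u \<in> carrier G" "w \<in> carrier G"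
  have e1: "inv (g \<otimes> u) \<otimes> (g \<otimes> w) = inv u \<otimes> w" using c
    by (simp add: inv_mult_group m_assoc[symmetric]) (simp add: m_assoc)
  have e2: "inv (g \<otimes> w) \<otimes> (g \<otimes> u) = inv w \<otimes> u" using c
    by (simp add: inv_mult_group m_assoc[symmetric]) (simp add: m_assoc)
  have e3: "g \<otimes> u = g \<otimes> w \<longleftrightarrow> u = w" using c by simp
  show ?thesis unfolding adj_def using e1 e2 e3 c by simp
qed

definition V where "V = {x. adj \<one> x \<and> x \<noteq> \<one>}"
definition key where "key x = (if x \<in> P then x else x \<otimes> D)"
definition prec where "prec x y \<longleftrightarrow> x \<noteq> y \<and> key x \<preceq> key y \<and> (y \<in> P \<longrightarrow> x \<in> P)"

lemma V_cases: "x \<in> V \<Longrightarrow> (x \<in> P \<and> x \<in> SS) \<or> (x \<notin> P \<and> inv x \<in> SS)"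
proof -
  assume "x \<in> V"
  hence x: "x \<in> carrier G" "x \<noteq> \<one>" "x \<in> SS \<or> inv x \<in> SS" unfolding V_def adj_def by auto
  show ?thesis
  proof (cases "x \<in> SS")
    case True thus ?thesis using SS_P by simp
  next
    case False
    hence "inv x \<in> SS" using x by simp
    moreover have "x \<notin> P" using PinvP x SS_P[OF \<open>inv x \<in> SS\<close>] by auto
    ultimately show ?thesis by simp
  qed
qed

lemma VC: "x \<in> V \<Longrightarrow> x \<in> carrier G" unfolding V_def adj_def by simp

lemma keyC: "x \<in> carrier G \<Longrightarrow> key x \<in> carrier G" by (simp add: key_def)

lemma key_simple: "x \<in> V \<Longrightarrow> key x \<in> simples G P D"
proof -
  assume x: "x \<in> V"
  show ?thesis
  proof (cases "x \<in> P")
    case True thus ?thesis using V_cases[OF x] by (simp add: key_def SS_def)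
  next
    case False
    hence "inv x \<in> simples G P D" using V_cases[OF x] by (simp add: SS_def)
    hence "del (inv x) \<in> simples G P D" by (rule del_simple)
    thus ?thesis using False VC[OF x] by (simp add: key_def del_def)
  qed
qed

lemma SS_le_D: "x \<in> SS \<Longrightarrow> x \<preceq> D" by (simp add: SS_def simples_iff)

lemma adjV: "x \<in> V \<Longrightarrow> y \<in> V \<Longrightarrow> x \<noteq> y \<Longrightarrow> adj x y \<longleftrightarrow> prec x y \<or> prec y x"
proof -
  assume x: "x \<in> V" and y: "y \<in> V" and ne: "x \<noteq> y"
  have xc: "x \<in> carrier G" and yc: "y \<in> carrier G" using x y VC by auto
  have adj_iff: "adj x y \<longleftrightarrow> close x y \<or> close y x" using close_adj adj_close adj_sym xc yc by blast
  have pp: "close u w \<longleftrightarrow> u \<preceq> w" if "u \<in> P" "w \<in> P" "u \<in> V" "w \<in> V" for u w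
  proof -
    have "w \<preceq> D" using V_cases[OF that(4)] that SS_le_D by auto
    moreover have "D \<preceq> u \<otimes> D" using that D_le_xD by simp
    ultimately have "w \<preceq> u \<otimes> D" using le_trans[of w D "u \<otimes> D"] that by simp
    thus ?thesis unfolding close_def by simp
  qed
  have nn: "close u w \<longleftrightarrow> u \<preceq> w" if "u \<notin> P" "w \<notin> P" "u \<in> V" "w \<in> V" for u w
  proof -
    have uc: "u \<in> carrier G" "w \<in> carrier G" using that VC by auto
    have "inv w \<in> P" using V_cases[OF that(4)] that SS_P by auto
    hence "w \<preceq> \<one>" using uc le_to_one_iff by simp
    moreover have "\<one> \<preceq> u \<otimes> D" using key_simple[OF that(3)] that uc
      by (simp add: key_def simples_iff le_one_iff)
    ultimately have "w \<preceq> u \<otimes> D" using le_trans[of w \<one> "u \<otimes> D"] uc by simp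
    thus ?thesis unfolding close_def by simp
  qed
  have np: "(close u w \<longleftrightarrow> w \<preceq> u \<otimes> D) \<and> \<not> close w u" if "u \<notin> P" "w \<in> P" "u \<in> V" "w \<in> V" for u w
  proof -
    have uc: "u \<in> carrier G" "w \<in> carrier G" using that VC by auto
    have "inv u \<in> P" using V_cases[OF that(3)] that SS_P by auto
    hence u1: "u \<preceq> \<one>" using uc le_to_one_iff by simp
    moreover have "\<one> \<preceq> w" using that uc le_one_iff by simp
    ultimately have "u \<preceq> w" using le_trans[of u \<one> w] uc by simp
    moreover have "\<not> w \<preceq> u"
    proof
      assume "w \<preceq> u"
      hence "w \<preceq> \<one>" using u1 le_trans[of w u \<one>] uc by simp
      hence "w = \<one>" using P_not_le_one that by simp
      thus False using that(4) by (simp add: V_def)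
    qed
    ultimately show ?thesis unfolding close_def by simp
  qed
  show ?thesis
  proof (cases "x \<in> P"; cases "y \<in> P")
    assume "x \<in> P" "y \<in> P" thus ?thesis using adj_iff pp x y ne by (simp add: prec_def key_def)
  next
    assume a: "x \<in> P" "y \<notin> P"
    thus ?thesis using adj_iff np[OF a(2) a(1) y x] ne by (auto simp: prec_def key_def)
  next
    assume a: "x \<notin> P" "y \<in> P"
    thus ?thesis using adj_iff np[OF a x y] ne by (auto simp: prec_def key_def)
  next
    assume a: "x \<notin> P" "y \<notin> P"
    thus ?thesis using adj_iff nn[OF a x y] nn[OF a(2) a(1) y x] ne le_rmultD xc yc
      by (simp add: prec_def key_def)
  qed
qed

lemma prec_trans: "x \<in> carrier G \<Longrightarrow> y \<in> carrier G \<Longrightarrow> z \<in> carrier G \<Longrightarrow> prec x y \<Longrightarrow> prec y z \<Longrightarrow> prec x z"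
proof -
  assume c: "x \<in> carrier G" "y \<in> carrier G" "z \<in> carrier G" and p: "prec x y" "prec y z"
  have k: "key x \<preceq> key y" "key y \<preceq> key z" using p by (auto simp: prec_def)
  have kxz: "key x \<preceq> key z" using le_trans[OF keyC keyC keyC k] c by simp
  have s: "z \<in> P \<longrightarrow> x \<in> P" using p by (auto simp: prec_def)
  have "x \<noteq> z"
  proof
    assume "x = z"
    hence "key y \<preceq> key x" using k by simp
    hence kk: "key x = key y" using le_antisym[OF keyC keyC] k c by blast
    have "x \<in> P \<longleftrightarrow> y \<in> P" using p \<open>x = z\<close> by (auto simp: prec_def)
    hence "x = y" using kk c by (auto simp: key_def split: if_splits)
    thus False using p by (simp add: prec_def)
  qed
  thus ?thesis using kxz s by (simp add: prec_def)
qed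

definition COND where "COND \<longleftrightarrow> (\<forall>a\<in>SS. \<forall>b\<in>SS. meetL G P a b \<in> {\<one>, a, b} \<and> meetR G P a b \<in> {\<one>, a, b})"

lemma MLc: "COND \<Longrightarrow> a \<in> SS \<Longrightarrow> b \<in> SS \<Longrightarrow> \<not> a \<preceq> b \<Longrightarrow> \<not> b \<preceq> a \<Longrightarrow> c \<in> carrier G \<Longrightarrow> c \<preceq> a \<Longrightarrow> c \<preceq> b \<Longrightarrow> c \<preceq> \<one>"
proof -
  assume C: "COND" and ab: "a \<in> SS" "b \<in> SS" "\<not> a \<preceq> b" "\<not> b \<preceq> a" and c: "c \<in> carrier G" "c \<preceq> a" "c \<preceq> b"
  have g: "is_glb_on (carrier G) (leL G P) a b (meetL G P a b)" using meet_glb ab by simp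
  have "meetL G P a b \<in> {\<one>, a, b}" using C ab unfolding COND_def by blast
  moreover have "meetL G P a b \<noteq> a" using g ab unfolding is_glb_on_def by auto
  moreover have "meetL G P a b \<noteq> b" using g ab unfolding is_glb_on_def by auto
  ultimately have "meetL G P a b = \<one>" by blast
  thus ?thesis using g c unfolding is_glb_on_def by auto
qed

lemma MRc: "COND \<Longrightarrow> a \<in> SS \<Longrightarrow> b \<in> SS \<Longrightarrow> \<not> leR G P a b \<Longrightarrow> \<not> leR G P b a \<Longrightarrow> c \<in> carrier G \<Longrightarrow>
   leR G P c a \<Longrightarrow> leR G P c b \<Longrightarrow> leR G P c \<one>"
proof -
  assume C: "COND" and ab: "a \<in> SS" "b \<in> SS" "\<not> leR G P a b" "\<not> leR G P b a" and c: "c \<in> carrier G" "leR G P c a" "leR G P c b"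
  have g: "is_glb_on (carrier G) (leR G P) a b (meetR G P a b)" using meetR_glb ab by simp
  have "meetR G P a b \<in> {\<one>, a, b}" using C ab unfolding COND_def by blast
  moreover have "meetR G P a b \<noteq> a" using g ab unfolding is_glb_on_def by auto
  moreover have "meetR G P a b \<noteq> b" using g ab unfolding is_glb_on_def by auto
  ultimately have "meetR G P a b = \<one>" by blast
  thus ?thesis using g c unfolding is_glb_on_def by auto
qed

lemma leR_del: "x \<in> carrier G \<Longrightarrow> y \<in> carrier G \<Longrightarrow> leR G P (del y) (del x) \<longleftrightarrow> x \<preceq> y"
proof -
  assume c: "x \<in> carrier G" "y \<in> carrier G"
  have "del x \<otimes> inv (del y) = inv x \<otimes> y" using c
    by (simp add: del_def inv_mult_group m_assoc[symmetric]) (simp add: m_assoc)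
  thus ?thesis by (simp add: leR_def le_def)
qed

lemma J: "COND \<Longrightarrow> a \<in> SS \<Longrightarrow> c \<in> SS \<Longrightarrow> \<not> a \<preceq> c \<Longrightarrow> \<not> c \<preceq> a \<Longrightarrow> u \<in> simples G P D \<Longrightarrow> a \<preceq> u \<Longrightarrow> c \<preceq> u \<Longrightarrow> u = D"
proof -
  assume C: "COND" and ac: "a \<in> SS" "c \<in> SS" "\<not> a \<preceq> c" "\<not> c \<preceq> a" and u: "u \<in> simples G P D" "a \<preceq> u" "c \<preceq> u"
  have uc: "u \<in> carrier G" using u simples_P by auto
  have acc: "a \<in> carrier G" "c \<in> carrier G" using ac by auto
  have ds: "del a \<in> simples G P D" "del c \<in> simples G P D" "del u \<in> simples G P D"
    using del_simple ac u by (auto simp: SS_def)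
  have dsP: "del a \<in> P" "del c \<in> P" "del u \<in> P" using ds simples_P by auto
  have r1: "leR G P (del u) (del a)" "leR G P (del u) (del c)" using leR_del u uc acc by auto
  have r2: "\<not> leR G P (del a) (del c)" "\<not> leR G P (del c) (del a)" using leR_del ac acc by auto
  have "del a \<noteq> \<one>"
  proof
    assume "del a = \<one>"
    hence "leR G P (del a) (del c)" using dsP leR_le_one by simp
    thus False using r2 by simp
  qed
  moreover have "del c \<noteq> \<one>"
  proof
    assume "del c = \<one>"
    hence "leR G P (del c) (del a)" using dsP leR_le_one by simp
    thus False using r2 by simp
  qed
  ultimately have "del a \<in> SS" "del c \<in> SS" using ds by (auto simp: SS_def)
  hence "leR G P (del u) \<one>" using MRc[OF C _ _ r2] r1 uc by simp
  hence "inv (del u) \<in> P" using leR_to_one uc by simp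
  hence "del u = \<one>" using PinvP[of "del u"] dsP by blast
  thus "u = D" using del_one_iff uc by simp
qed

lemma Vpos: "x \<in> V \<Longrightarrow> x \<in> P \<Longrightarrow> x \<in> SS \<and> key x = x"
  using V_cases by (auto simp: key_def)
lemma Vneg: "x \<in> V \<Longrightarrow> x \<notin> P \<Longrightarrow> inv x \<in> SS \<and> key x = x \<otimes> D"
  using V_cases by (auto simp: key_def)
lemma prec_pos: "prec x y \<Longrightarrow> y \<in> P \<Longrightarrow> x \<in> P" by (simp add: prec_def)
lemma prec_same: "x \<noteq> y \<Longrightarrow> (x \<in> P \<longleftrightarrow> y \<in> P) \<Longrightarrow> prec x y \<longleftrightarrow> key x \<preceq> key y"
  by (auto simp: prec_def)

lemma sq_mixed: "COND \<Longrightarrow> a \<in> V \<Longrightarrow> b \<in> V \<Longrightarrow> c \<in> V \<Longrightarrow> d \<in> V \<Longrightarrow>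
  prec a b \<Longrightarrow> prec a d \<Longrightarrow> prec c b \<Longrightarrow> prec c d \<Longrightarrow> \<not> prec a c \<Longrightarrow> \<not> prec c a \<Longrightarrow> a \<noteq> c \<Longrightarrow>
  b \<in> P \<Longrightarrow> d \<notin> P \<Longrightarrow> prec b d"
proof -
  assume C: COND and V: "a \<in> V" "b \<in> V" "c \<in> V" "d \<in> V"
    and p: "prec a b" "prec a d" "prec c b" "prec c d" "\<not> prec a c" "\<not> prec c a" "a \<noteq> c"
    and bd: "b \<in> P" "d \<notin> P"
  have aP: "a \<in> P" "c \<in> P" using prec_pos p bd by auto
  have ka: "a \<in> SS" "key a = a" "c \<in> SS" "key c = c" "b \<in> SS" "key b = b" using Vpos V aP bd by auto
  have inc: "\<not> a \<preceq> c" "\<not> c \<preceq> a" using p prec_same[of a c] prec_same[of c a] aP ka by auto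
  have le1: "a \<preceq> b" "c \<preceq> b" "a \<preceq> key d" "c \<preceq> key d" using p ka by (auto simp: prec_def)
  have bD: "b = D" using J[OF C ka(1) ka(3) inc] le1 ka by (simp add: SS_def)
  have "key d = D" using J[OF C ka(1) ka(3) inc] le1 key_simple V by simp
  hence "key b \<preceq> key d" using bD ka le_refl by simp
  moreover have "b \<noteq> d" using bd by auto
  ultimately show "prec b d" using bd by (simp add: prec_def)
qed

lemma no_square: "COND \<Longrightarrow> a \<in> V \<Longrightarrow> b \<in> V \<Longrightarrow> c \<in> V \<Longrightarrow> d \<in> V \<Longrightarrow>
  prec a b \<Longrightarrow> prec a d \<Longrightarrow> prec c b \<Longrightarrow> prec c d \<Longrightarrow> \<not> prec a c \<Longrightarrow> \<not> prec c a \<Longrightarrow> a \<noteq> c \<Longrightarrow>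
  \<not> prec b d \<Longrightarrow> \<not> prec d b \<Longrightarrow> b \<noteq> d \<Longrightarrow> False"
proof -
  assume C: COND and V: "a \<in> V" "b \<in> V" "c \<in> V" "d \<in> V"
    and p: "prec a b" "prec a d" "prec c b" "prec c d" "\<not> prec a c" "\<not> prec c a" "a \<noteq> c"
      "\<not> prec b d" "\<not> prec d b" "b \<noteq> d"
  have Vc: "a \<in> carrier G" "b \<in> carrier G" "c \<in> carrier G" "d \<in> carrier G" using V VC by auto
  consider "b \<in> P" "d \<in> P" | "b \<in> P" "d \<notin> P" | "b \<notin> P" "d \<in> P" | "b \<notin> P" "d \<notin> P" by blast
  thus False
  proof cases
    case 1
    have aP: "a \<in> P" using prec_pos p 1 by auto
    have k: "a \<in> SS" "key a = a" "b \<in> SS" "key b = b" "d \<in> SS" "key d = d" using Vpos V aP 1 by auto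
    have inc: "\<not> b \<preceq> d" "\<not> d \<preceq> b" using p prec_same[of b d] prec_same[of d b] 1 k by auto
    have "a \<preceq> b" "a \<preceq> d" using p k by (auto simp: prec_def)
    hence "a \<preceq> \<one>" using MLc[OF C k(3) k(5) inc] Vc by simp
    hence "a = \<one>" using P_not_le_one aP by simp
    thus False using k by (simp add: SS_def)
  next
    case 2 thus False using sq_mixed[OF C V p(1-7)] p by simp
  next
    case 3 thus False using sq_mixed[OF C V(1) V(4) V(3) V(2) p(2) p(1) p(4) p(3) p(5-7)] p by simp
  next
    case 4
    have kb: "inv b \<in> SS" "key b = b \<otimes> D" "inv d \<in> SS" "key d = d \<otimes> D" using Vneg V 4 by auto
    have ks: "key b \<in> simples G P D" "key d \<in> simples G P D" using key_simple V by auto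
    have inc: "\<not> key b \<preceq> key d" "\<not> key d \<preceq> key b" using p prec_same[of b d] prec_same[of d b] 4 by auto
    have kSS: "key b \<in> SS" "key d \<in> SS"
    proof -
      have "key b \<noteq> \<one>" using inc ks le_one_iff simples_P by auto
      moreover have "key d \<noteq> \<one>" using inc ks le_one_iff simples_P by auto
      ultimately show "key b \<in> SS" "key d \<in> SS" using ks by (auto simp: SS_def)
    qed
    have pos_case: "x \<in> V \<Longrightarrow> x \<in> P \<Longrightarrow> prec x b \<Longrightarrow> prec x d \<Longrightarrow> False" for x
    proof -
      assume x: "x \<in> V" "x \<in> P" "prec x b" "prec x d"
      have k: "x \<in> SS" "key x = x" using Vpos x by auto
      have "x \<preceq> key b" "x \<preceq> key d" using x k by (auto simp: prec_def)
      hence "x \<preceq> \<one>" using MLc[OF C kSS inc] VC x by simp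
      hence "x = \<one>" using P_not_le_one x by simp
      thus False using k by (simp add: SS_def)
    qed
    show False
    proof (cases "a \<in> P \<or> c \<in> P")
      case True thus False using pos_case V p by blast
    next
      case False
      have ka: "inv a \<in> SS" "key a = a \<otimes> D" "inv c \<in> SS" "key c = c \<otimes> D" using Vneg V False by auto
      have "key a \<preceq> key b" "key c \<preceq> key b" using p by (auto simp: prec_def)
      hence l: "a \<preceq> b" "c \<preceq> b" using ka kb le_rmultD Vc by auto
      have r1: "leR G P (inv b) (inv a)" "leR G P (inv b) (inv c)" using l Vc by (auto simp: leR_iff)
      have "\<not> key a \<preceq> key c" "\<not> key c \<preceq> key a"
        using p prec_same[of a c] prec_same[of c a] False by auto
      hence "\<not> a \<preceq> c" "\<not> c \<preceq> a" using ka le_rmultD Vc by auto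
      hence r2: "\<not> leR G P (inv a) (inv c)" "\<not> leR G P (inv c) (inv a)" using Vc by (auto simp: leR_iff)
      have "leR G P (inv b) \<one>" using MRc[OF C ka(1) ka(3) r2] r1 Vc by simp
      hence "b \<in> P" using leR_to_one Vc by simp
      thus False using 4 by simp
    qed
  qed
qed

lemma five_cycle:
  assumes tr0: "\<forall>x\<in>A. \<forall>y\<in>A. \<forall>z\<in>A. R x y \<longrightarrow> R y z \<longrightarrow> R x z"
  and A: "x0 \<in> A" "x1 \<in> A" "x2 \<in> A" "x3 \<in> A" "x4 \<in> A"
  and E: "R x0 x1 \<or> R x1 x0" "R x1 x2 \<or> R x2 x1" "R x2 x3 \<or> R x3 x2" "R x3 x4 \<or> R x4 x3" "R x4 x0 \<or> R x0 x4"
  and N: "\<not> R x0 x2" "\<not> R x2 x0" "\<not> R x0 x3" "\<not> R x3 x0" "\<not> R x1 x3" "\<not> R x3 x1"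
         "\<not> R x1 x4" "\<not> R x4 x1" "\<not> R x2 x4" "\<not> R x4 x2"
  shows False
proof -
  have tr: "\<And>x y z. x \<in> A \<Longrightarrow> y \<in> A \<Longrightarrow> z \<in> A \<Longrightarrow> R x y \<Longrightarrow> R y z \<Longrightarrow> R x z" using tr0 by blast
  show False using E N tr[OF A(1) A(2) A(3)] tr[OF A(3) A(2) A(1)] tr[OF A(2) A(3) A(4)] tr[OF A(4) A(3) A(2)]
    tr[OF A(3) A(4) A(5)] tr[OF A(5) A(4) A(3)] tr[OF A(4) A(5) A(1)] tr[OF A(1) A(5) A(4)]
    tr[OF A(5) A(1) A(2)] tr[OF A(2) A(1) A(5)]
  by blast
qed

lemma four_cycle:
  assumes tr0: "\<forall>x\<in>A. \<forall>y\<in>A. \<forall>z\<in>A. R x y \<longrightarrow> R y z \<longrightarrow> R x z"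
  and A: "x0 \<in> A" "x1 \<in> A" "x2 \<in> A" "x3 \<in> A"
  and E: "R x0 x1 \<or> R x1 x0" "R x1 x2 \<or> R x2 x1" "R x2 x3 \<or> R x3 x2" "R x3 x0 \<or> R x0 x3"
  and N: "\<not> R x0 x2" "\<not> R x2 x0" "\<not> R x1 x3" "\<not> R x3 x1"
  shows "(R x0 x1 \<and> R x2 x1 \<and> R x2 x3 \<and> R x0 x3) \<or> (R x1 x0 \<and> R x1 x2 \<and> R x3 x2 \<and> R x3 x0)"
proof -
  have tr: "\<And>x y z. x \<in> A \<Longrightarrow> y \<in> A \<Longrightarrow> z \<in> A \<Longrightarrow> R x y \<Longrightarrow> R y z \<Longrightarrow> R x z" using tr0 by blast
  show ?thesis using E N tr[OF A(1) A(2) A(3)] tr[OF A(3) A(2) A(1)] tr[OF A(2) A(3) A(4)] tr[OF A(4) A(3) A(2)]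
    tr[OF A(3) A(4) A(1)] tr[OF A(1) A(4) A(3)] tr[OF A(4) A(1) A(2)] tr[OF A(2) A(1) A(4)]
  by blast
qed

lemma inV: "g \<in> carrier G \<Longrightarrow> adj g u \<Longrightarrow> u \<noteq> g \<Longrightarrow> inv g \<otimes> u \<in> V"
proof -
  assume a: "g \<in> carrier G" "adj g u" "u \<noteq> g"
  have uc: "u \<in> carrier G" using a adjC by auto
  have "adj (inv g \<otimes> g) (inv g \<otimes> u)" using adj_lmult[of "inv g" g u] a uc by simp
  moreover have "inv g \<otimes> u \<noteq> \<one>" using a uc by (metis inv_equality inv_inv inv_closed)
  ultimately show ?thesis using a by (simp add: V_def)
qed

lemma six_large_link: "COND \<Longrightarrow> g \<in> carrier G \<Longrightarrow> six_large (link X g)"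
  unfolding six_large_def
proof (intro ballI allI impI)
  fix k :: nat and c :: "nat \<Rightarrow> 'a"
  assume C: COND and gc: "g \<in> carrier G" and k: "k \<in> {4, 5}"
    and cy: "inj_on c {..<k} \<and> (\<forall>i<k. is_edge (link X g) (c i) (c ((i + 1) mod k)))"
  let ?y = "\<lambda>i. inv g \<otimes> c i"
  have ed: "\<And>i. i < k \<Longrightarrow> is_edge (link X g) (c i) (c ((i + 1) mod k))" using cy by blast
  have vi: "\<And>i. i < k \<Longrightarrow> adj g (c i) \<and> c i \<noteq> g"
    using ed is_edge_link by blast
  have ci: "\<And>i. i < k \<Longrightarrow> c i \<in> carrier G" using vi adjC by blast
  have yV: "\<And>i. i < k \<Longrightarrow> ?y i \<in> V" using vi inV gc by blast
  have yc: "\<And>i. i < k \<Longrightarrow> ?y i \<in> carrier G" using yV VC by blast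
  have adjy: "\<And>i j. i < k \<Longrightarrow> j < k \<Longrightarrow> adj (c i) (c j) \<longleftrightarrow> adj (?y i) (?y j)"
    using adj_lmult[of "inv g"] ci gc by simp
  have injy: "\<And>i j. i < k \<Longrightarrow> j < k \<Longrightarrow> i \<noteq> j \<Longrightarrow> ?y i \<noteq> ?y j"
  proof -
    fix i j assume ij: "i < k" "j < k" "i \<noteq> j"
    hence "c i \<noteq> c j" using cy unfolding inj_on_def by blast
    thus "?y i \<noteq> ?y j" using ci ij gc by simp
  qed
  have Eiff: "\<And>i j. i < k \<Longrightarrow> j < k \<Longrightarrow> i \<noteq> j \<Longrightarrow> adj (c i) (c j) \<longleftrightarrow> prec (?y i) (?y j) \<or> prec (?y j) (?y i)"
    using adjy adjV yV injy by blast
  have Eadj: "\<And>i. i < k \<Longrightarrow> adj (c i) (c ((i + 1) mod k))" using ed is_edge_link by blast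
  show "\<exists>i<k. \<exists>j<k. j \<noteq> (i + 1) mod k \<and> i \<noteq> (j + 1) mod k \<and> i \<noteq> j \<and> is_edge (link X g) (c i) (c j)"
  proof (rule ccontr)
    assume nd: "\<not> ?thesis"
    have N: "\<And>i j. i < k \<Longrightarrow> j < k \<Longrightarrow> j \<noteq> (i + 1) mod k \<Longrightarrow> i \<noteq> (j + 1) mod k \<Longrightarrow> i \<noteq> j \<Longrightarrow>
        \<not> prec (?y i) (?y j) \<and> \<not> prec (?y j) (?y i)"
    proof -
      fix i j assume ij: "i < k" "j < k" "j \<noteq> (i + 1) mod k" "i \<noteq> (j + 1) mod k" "i \<noteq> j"
      have "\<not> is_edge (link X g) (c i) (c j)" using nd ij by blast
      moreover have "c i \<noteq> c j" using cy ij unfolding inj_on_def by blast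
      ultimately have "\<not> adj (c i) (c j)" using vi ij is_edge_link by blast
      thus "\<not> prec (?y i) (?y j) \<and> \<not> prec (?y j) (?y i)" using Eiff ij by blast
    qed
    have E: "\<And>i. i < k \<Longrightarrow> prec (?y i) (?y ((i + 1) mod k)) \<or> prec (?y ((i + 1) mod k)) (?y i)"
    proof -
      fix i assume i: "i < k"
      have "(i + 1) mod k < k" using k by auto
      moreover have "i \<noteq> (i + 1) mod k" using k i by (auto simp: mod_if)
      ultimately show "prec (?y i) (?y ((i + 1) mod k)) \<or> prec (?y ((i + 1) mod k)) (?y i)"
        using Eiff Eadj i by blast
    qed
    have tr: "\<forall>x\<in>V. \<forall>y\<in>V. \<forall>z\<in>V. prec x y \<longrightarrow> prec y z \<longrightarrow> prec x z"
      using prec_trans VC by blast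
    have Ei: "\<And>i j. i < k \<Longrightarrow> j = (i + 1) mod k \<Longrightarrow> prec (?y i) (?y j) \<or> prec (?y j) (?y i)"
      using E by blast
    define y0 where "y0 = ?y 0"
    define y1 where "y1 = ?y 1"
    define y2 where "y2 = ?y 2"
    define y3 where "y3 = ?y 3"
    define y4 where "y4 = ?y 4"
    note yd = y0_def y1_def y2_def y3_def y4_def
    from k show False
    proof
      assume k4: "k = 4"
      have e: "prec y0 y1 \<or> prec y1 y0" "prec y1 y2 \<or> prec y2 y1"
        "prec y2 y3 \<or> prec y3 y2" "prec y3 y0 \<or> prec y0 y3"
        unfolding yd by (rule Ei; simp add: k4)+
      have n: "\<not> prec y0 y2 \<and> \<not> prec y2 y0" "\<not> prec y1 y3 \<and> \<not> prec y3 y1"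
        unfolding yd by (rule N; simp add: k4)+
      have A: "y0 \<in> V" "y1 \<in> V" "y2 \<in> V" "y3 \<in> V" unfolding yd by (rule yV; simp add: k4)+
      have d: "y0 \<noteq> y2" "y1 \<noteq> y3" unfolding yd by (rule injy; simp add: k4)+
      have "(prec y0 y1 \<and> prec y2 y1 \<and> prec y2 y3 \<and> prec y0 y3) \<or>
            (prec y1 y0 \<and> prec y1 y2 \<and> prec y3 y2 \<and> prec y3 y0)"
        using four_cycle[where A=V, OF tr A e] n by blast
      thus False
      proof
        assume h: "prec y0 y1 \<and> prec y2 y1 \<and> prec y2 y3 \<and> prec y0 y3"
        show False
          using no_square[OF C A(1) A(2) A(3) A(4)] h n d by blast
      next
        assume h: "prec y1 y0 \<and> prec y1 y2 \<and> prec y3 y2 \<and> prec y3 y0"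
        show False
          using no_square[OF C A(2) A(1) A(4) A(3)] h n d by blast
      qed
    next
      assume "k \<in> {5}"
      hence k5: "k = 5" by simp
      have e: "prec y0 y1 \<or> prec y1 y0" "prec y1 y2 \<or> prec y2 y1"
        "prec y2 y3 \<or> prec y3 y2" "prec y3 y4 \<or> prec y4 y3" "prec y4 y0 \<or> prec y0 y4"
        unfolding yd by (rule Ei; simp add: k5)+
      have n: "\<not> prec y0 y2 \<and> \<not> prec y2 y0" "\<not> prec y0 y3 \<and> \<not> prec y3 y0"
        "\<not> prec y1 y3 \<and> \<not> prec y3 y1" "\<not> prec y1 y4 \<and> \<not> prec y4 y1"
        "\<not> prec y2 y4 \<and> \<not> prec y4 y2"
        unfolding yd by (rule N; simp add: k5)+
      have A: "y0 \<in> V" "y1 \<in> V" "y2 \<in> V" "y3 \<in> V" "y4 \<in> V" unfolding yd by (rule yV; simp add: k5)+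
      show False
        using five_cycle[where A=V, OF tr A e] n by blast
    qed
  qed
qed

lemma COND_systolic: "COND \<Longrightarrow> systolic_complex X"
  unfolding systolic_complex_def
proof (intro conjI ballI)
  show "simplicial_complex X" unfolding simplicial_complex_def
  proof (intro ballI conjI allI impI)
    fix \<sigma> assume s: "\<sigma> \<in> X"
    thus "finite \<sigma>" "\<sigma> \<noteq> {}" by (simp_all add: Flag_iff)
    fix \<tau> assume t: "\<tau> \<subseteq> \<sigma> \<and> \<tau> \<noteq> {}"
    have "finite \<tau>" using t s finite_subset by (auto simp: Flag_iff)
    thus "\<tau> \<in> X" using s t unfolding Flag_iff by blast
  qed
  show "connected_complex X" using Flag_simply_connected by (simp add: simply_connected_complex_def)
  show "simply_connected_complex X" by (rule Flag_simply_connected)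
  fix v assume "COND" "v \<in> verts X"
  thus "flag_complex_prop (link X v)" "six_large (link X v)" using link_flag six_large_link verts_X by auto
qed

lemma lt4: "(i::nat) < 4 \<Longrightarrow> i = 0 \<or> i = 1 \<or> i = 2 \<or> i = 3" by arith

lemma four_not_large:
  assumes d: "distinct [u0, u1, u2, u3]"
  and e: "is_edge Z u0 u1" "is_edge Z u1 u2" "is_edge Z u2 u3" "is_edge Z u3 u0"
  and n: "\<not> is_edge Z u0 u2" "\<not> is_edge Z u1 u3"
  shows "\<not> six_large Z"
proof -
  let ?c = "(!) [u0, u1, u2, u3]"
  have sym: "is_edge Z x y \<longleftrightarrow> is_edge Z y x" for x y unfolding is_edge_def by (auto simp: insert_commute)
  have inj: "inj_on ?c {..<4}" by (rule inj_on_nth) (use d in auto)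
  have ed: "\<forall>i<4. is_edge Z (?c i) (?c ((i + 1) mod 4))"
  proof (intro allI impI)
    fix i :: nat assume "i < 4"
    thus "is_edge Z (?c i) (?c ((i + 1) mod 4))" using lt4 e by fastforce
  qed
  have nd: "\<not> (\<exists>i<4. \<exists>j<4. j \<noteq> (i + 1) mod 4 \<and> i \<noteq> (j + 1) mod 4 \<and> i \<noteq> j \<and> is_edge Z (?c i) (?c j))"
  proof
    assume "\<exists>i<4. \<exists>j<4. j \<noteq> (i + 1) mod 4 \<and> i \<noteq> (j + 1) mod 4 \<and> i \<noteq> j \<and> is_edge Z (?c i) (?c j)"
    then obtain i j :: nat where ij: "i < 4" "j < 4" "j \<noteq> (i + 1) mod 4" "i \<noteq> (j + 1) mod 4" "i \<noteq> j" "is_edge Z (?c i) (?c j)"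
      by blast
    have "(i = 0 \<and> j = 2) \<or> (i = 2 \<and> j = 0) \<or> (i = 1 \<and> j = 3) \<or> (i = 3 \<and> j = 1)"
      using lt4[OF ij(1)] lt4[OF ij(2)] ij(3-5) by auto
    thus False using ij(6) n sym by auto
  qed
  show ?thesis unfolding six_large_def
    using inj ed nd by blast
qed

lemma cancel1[simp]: "x \<in> carrier G \<Longrightarrow> y \<in> carrier G \<Longrightarrow> x \<otimes> (inv x \<otimes> y) = y"
  by (simp add: m_assoc[symmetric])
lemma cancel2[simp]: "x \<in> carrier G \<Longrightarrow> y \<in> carrier G \<Longrightarrow> inv x \<otimes> (x \<otimes> y) = y"
  by (simp add: m_assoc[symmetric])

lemma close_intro: "x \<in> carrier G \<Longrightarrow> y \<in> carrier G \<Longrightarrow> inv x \<otimes> y \<in> P \<Longrightarrow> inv y \<otimes> (x \<otimes> D) \<in> P \<Longrightarrow> close x y"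
  by (simp add: close_def le_def)

lemma adj_intro: "x \<in> carrier G \<Longrightarrow> y \<in> carrier G \<Longrightarrow> inv x \<otimes> y \<in> P \<Longrightarrow> inv y \<otimes> (x \<otimes> D) \<in> P \<Longrightarrow> adj x y"
  using close_intro close_adj by simp

lemma edge_link_intro: "adj g u \<Longrightarrow> adj g w \<Longrightarrow> adj u w \<Longrightarrow> u \<noteq> w \<Longrightarrow> u \<noteq> g \<Longrightarrow> w \<noteq> g \<Longrightarrow> is_edge (link X g) u w"
  using is_edge_link by simp

lemma not_edge_link: "\<not> adj u w \<Longrightarrow> \<not> is_edge (link X g) u w"
  using is_edge_link by simp

lemma adj_incomp: "adj u w \<Longrightarrow> u \<preceq> w \<or> w \<preceq> u"
  using adj_close close_def by blast

lemma D_ne_one: "a \<in> SS \<Longrightarrow> D \<noteq> \<one>"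
proof
  assume a: "a \<in> SS" and "D = \<one>"
  hence "a \<preceq> \<one>" using SS_le_D by simp
  moreover have "a \<in> P" using SS_P a by simp
  ultimately have "a = \<one>" using P_not_le_one by simp
  thus False using a by (simp add: SS_def)
qed

lemma failL: "a \<in> SS \<Longrightarrow> b \<in> SS \<Longrightarrow> meetL G P a b \<notin> {\<one>, a, b} \<Longrightarrow> \<exists>g \<in> carrier G. \<not> six_large (link X g)"
proof -
  assume ab: "a \<in> SS" "b \<in> SS" and m0: "meetL G P a b \<notin> {\<one>, a, b}"
  define m where "m = meetL G P a b"
  have ac: "a \<in> carrier G" "b \<in> carrier G" "a \<in> P" "b \<in> P" using ab SS_P by auto
  have g: "is_glb_on (carrier G) (leL G P) a b m" using meet_glb ac by (simp add: m_def)
  have mc: "m \<in> carrier G" "m \<preceq> a" "m \<preceq> b" using g unfolding is_glb_on_def by auto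
  have mne: "m \<noteq> \<one>" "m \<noteq> a" "m \<noteq> b" using m0 by (auto simp: m_def)
  have inc: "\<not> a \<preceq> b" "\<not> b \<preceq> a"
  proof -
    show "\<not> a \<preceq> b"
    proof
      assume "a \<preceq> b"
      hence "is_glb_on (carrier G) (leL G P) a b a" unfolding is_glb_on_def using ac le_refl by auto
      hence "m = a" using meet_eq ac g by (metis m_def)
      thus False using mne by simp
    qed
    show "\<not> b \<preceq> a"
    proof
      assume "b \<preceq> a"
      hence "is_glb_on (carrier G) (leL G P) a b b" unfolding is_glb_on_def using ac le_refl by auto
      hence "m = b" using meet_eq ac g by (metis m_def)
      thus False using mne by simp
    qed
  qed
  have "\<one> \<preceq> m" using g ac le_one_iff unfolding is_glb_on_def by auto
  hence mP: "m \<in> P" using le_one_iff mc by simp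
  have aD: "a \<preceq> D" "b \<preceq> D" using ab SS_le_D by auto
  have Dne: "D \<noteq> \<one>" using D_ne_one ab by simp
  have mD: "m \<preceq> D" using le_trans[of m a D] mc aD ac by simp
  have Dm: "D \<preceq> m \<otimes> D" using D_le_xD mP by simp
  define n where "n = m \<otimes> D"
  have nc: "n \<in> carrier G" using mc by (simp add: n_def)
  have clo: "close m a" "close m b" "close m n" "close a n" "close b n" "close \<one> m" "close \<one> a" "close \<one> b"
  proof -
    show "close m a" unfolding close_def using mc le_trans[of a D n] aD Dm ac nc by (simp add: n_def)
    show "close m b" unfolding close_def using mc le_trans[of b D n] aD Dm ac nc by (simp add: n_def)
    show "close m n" unfolding close_def n_def using mc x_le_xD le_refl by simp
    show "close a n" unfolding close_def using le_trans[of a D n] aD Dm ac nc le_rmultD mc by (simp add: n_def)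
    show "close b n" unfolding close_def using le_trans[of b D n] aD Dm ac nc le_rmultD mc by (simp add: n_def)
    show "close \<one> m" "close \<one> a" "close \<one> b" unfolding close_def using mP ac aD mD le_one_iff mc by auto
  qed
  have adjs: "adj m a" "adj m b" "adj m n" "adj a n" "adj b n" "adj \<one> m" "adj \<one> a" "adj \<one> b"
    using clo close_adj mc ac nc by auto
  have n1: "n \<noteq> \<one>"
  proof
    assume "n = \<one>"
    hence "D \<preceq> \<one>" using Dm by (simp add: n_def)
    thus False using P_not_le_one DP Dne by simp
  qed
  have nD: "\<not> n \<preceq> D"
  proof
    assume "n \<preceq> D"
    hence "m \<otimes> D \<preceq> D" by (simp add: n_def)
    hence "m \<preceq> \<one>" using le_rmultD[of m \<one>] mc by simp
    thus False using P_not_le_one mP mne by simp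
  qed
  have na: "n \<noteq> a" "n \<noteq> b" using nD aD by auto
  have nm: "n \<noteq> m" using Dne mc by (simp add: n_def)
  have a1: "a \<noteq> \<one>" "b \<noteq> \<one>" using ab by (auto simp: SS_def)
  have abne: "a \<noteq> b" using inc le_refl ac by auto
  have nadj1: "\<not> adj a b" using adj_incomp inc by blast
  have nadj2: "\<not> adj n \<one>"
  proof
    assume "adj n \<one>"
    hence "n \<preceq> \<one> \<or> \<one> \<preceq> n" using adj_incomp by blast
    moreover have "\<not> \<one> \<preceq> n \<or> n \<preceq> D"
    proof -
      { assume "\<one> \<preceq> n" "adj n \<one>"
        hence "close \<one> n" using adj_close[of n \<one>] close_def le_antisym nc n1 by auto
        hence "n \<preceq> D" by (simp add: close_def) }
      thus ?thesis using \<open>adj n \<one>\<close> by blast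
    qed
    moreover have "n \<in> P" using mP DP multP by (simp add: n_def)
    hence "\<not> n \<preceq> \<one>" using P_not_le_one n1 by blast
    ultimately show False using nD by blast
  qed
  have "\<not> six_large (link X m)"
  proof (rule four_not_large[of a n b \<one>])
    show "distinct [a, n, b, \<one>]" using na abne a1 n1 by auto
    show "is_edge (link X m) a n" by (rule edge_link_intro) (use adjs na mne nm in auto)
    show "is_edge (link X m) n b" by (rule edge_link_intro) (use adjs na mne nm adj_sym in auto)
    show "is_edge (link X m) b \<one>" by (rule edge_link_intro) (use adjs a1 mne adj_sym in auto)
    show "is_edge (link X m) \<one> a" by (rule edge_link_intro) (use adjs a1 mne adj_sym in auto)
    show "\<not> is_edge (link X m) a b" using nadj1 not_edge_link by blast
    show "\<not> is_edge (link X m) n \<one>" using nadj2 not_edge_link by blast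
  qed
  thus ?thesis using mc by blast
qed

lemma inv_eq_iff: "x \<in> carrier G \<Longrightarrow> y \<in> carrier G \<Longrightarrow> inv x = inv y \<longleftrightarrow> x = y"
  by (metis inv_inv)

lemma failR: "a \<in> SS \<Longrightarrow> b \<in> SS \<Longrightarrow> meetR G P a b \<notin> {\<one>, a, b} \<Longrightarrow> \<exists>g \<in> carrier G. \<not> six_large (link X g)"
proof -
  assume ab: "a \<in> SS" "b \<in> SS" and m0: "meetR G P a b \<notin> {\<one>, a, b}"
  define m where "m = meetR G P a b"
  have ac: "a \<in> carrier G" "b \<in> carrier G" "a \<in> P" "b \<in> P" using ab SS_P by auto
  have g: "is_glb_on (carrier G) (leR G P) a b m" using meetR_glb ac by (simp add: m_def)
  have mc: "m \<in> carrier G" "leR G P m a" "leR G P m b" using g unfolding is_glb_on_def by auto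
  have mne: "m \<noteq> \<one>" "m \<noteq> a" "m \<noteq> b" using m0 by (auto simp: m_def)
  have Rrefl: "x \<in> carrier G \<Longrightarrow> leR G P x x" for x by (simp add: leR_def oneP)
  have inc: "\<not> leR G P a b" "\<not> leR G P b a"
  proof -
    show "\<not> leR G P a b"
    proof
      assume "leR G P a b"
      hence "leR G P a m" using g Rrefl ac unfolding is_glb_on_def by blast
      hence "m = a" using leR_antisym mc ac by blast
      thus False using mne by simp
    qed
    show "\<not> leR G P b a"
    proof
      assume "leR G P b a"
      hence "leR G P b m" using g Rrefl ac unfolding is_glb_on_def by blast
      hence "m = b" using leR_antisym mc ac by blast
      thus False using mne by simp
    qed
  qed
  have "leR G P \<one> m" using g ac leR_le_one unfolding is_glb_on_def by auto
  hence mP: "m \<in> P" using leR_le_one mc by simp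
  have aD: "a \<preceq> D" "b \<preceq> D" using ab SS_le_D by auto
  have Dne: "D \<noteq> \<one>" using D_ne_one ab by simp
  define a' where "a' = a \<otimes> inv m"
  define b' where "b' = b \<otimes> inv m"
  have a'P: "a' \<in> P" "b' \<in> P" using mc by (auto simp: a'_def b'_def leR_def)
  have a'c: "a' \<in> carrier G" "b' \<in> carrier G" using a'P by auto
  have "inv a' \<otimes> a = m" using ac mc by (simp add: a'_def inv_mult_group m_assoc)
  hence "a' \<preceq> a" using mP by (simp add: le_def)
  hence a'D: "a' \<preceq> D" using le_trans[of a' a D] aD ac a'c by simp
  have "inv b' \<otimes> b = m" using ac mc by (simp add: b'_def inv_mult_group m_assoc)
  hence "b' \<preceq> b" using mP by (simp add: le_def)
  hence b'D: "b' \<preceq> D" using le_trans[of b' b D] aD ac a'c by simp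
  have mD: "inv m \<otimes> D \<in> P"
  proof -
    have "(inv a \<otimes> D) \<otimes> (inv D \<otimes> a' \<otimes> D) = inv m \<otimes> D" using ac mc
      by (simp add: a'_def m_assoc)
    moreover have "inv a \<otimes> D \<in> P" using aD by (simp add: le_def)
    moreover have "inv D \<otimes> a' \<otimes> D \<in> P" using conj_iff a'P a'c by simp
    ultimately show ?thesis using multP by metis
  qed
  define z where "z = inv m"
  define u1 where "u1 = inv m \<otimes> inv D"
  have zc: "z \<in> carrier G" "u1 \<in> carrier G" using mc by (auto simp: z_def u1_def)
  have ia: "inv a' = m \<otimes> inv a" "inv b' = m \<otimes> inv b" using ac mc
    by (auto simp: a'_def b'_def inv_mult_group)
  have a'D2: "inv a' \<otimes> D \<in> P" "inv b' \<otimes> D \<in> P" using a'D b'D by (auto simp: le_def)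
  have Da': "D \<otimes> inv a' \<in> P" "D \<otimes> inv b' \<in> P"
  proof -
    have "D \<otimes> (inv a' \<otimes> D) \<otimes> inv D = D \<otimes> inv a'" using a'c by (simp add: m_assoc)
    thus "D \<otimes> inv a' \<in> P" using conj_iff2[of "inv a' \<otimes> D"] a'D2 a'c by simp
    have "D \<otimes> (inv b' \<otimes> D) \<otimes> inv D = D \<otimes> inv b'" using a'c by (simp add: m_assoc)
    thus "D \<otimes> inv b' \<in> P" using conj_iff2[of "inv b' \<otimes> D"] a'D2 a'c by simp
  qed
  have adjs: "adj (inv a) z" "adj (inv b) z" "adj u1 z" "adj z \<one>" "adj u1 (inv a)" "adj u1 (inv b)"
     "adj (inv b) \<one>" "adj (inv a) \<one>"
  proof -
    show "adj (inv a) z" apply (rule adj_intro) using ac mc a'P a'D2 ia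
      by (auto simp: z_def a'_def m_assoc)
    show "adj (inv b) z" apply (rule adj_intro) using ac mc a'P a'D2 ia
      by (auto simp: z_def b'_def m_assoc)
    show "adj u1 z" apply (rule adj_intro) using mc DP oneP
      by (auto simp: z_def u1_def m_assoc inv_mult_group)
    show "adj z \<one>" apply (rule adj_intro) using mc mP mD
      by (auto simp: z_def)
    show "adj u1 (inv a)" apply (rule adj_intro) using ac mc a'P Da' ia
      by (auto simp: u1_def a'_def m_assoc inv_mult_group)
    show "adj u1 (inv b)" apply (rule adj_intro) using ac mc a'P Da' ia
      by (auto simp: u1_def b'_def m_assoc inv_mult_group)
    show "adj (inv b) \<one>" apply (rule adj_intro) using ac aD by (auto simp: le_def)
    show "adj (inv a) \<one>" apply (rule adj_intro) using ac aD by (auto simp: le_def)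
  qed
  have u1ne: "u1 \<noteq> \<one>"
  proof
    assume "u1 = \<one>"
    hence "inv m \<otimes> inv D = \<one>" by (simp add: u1_def)
    hence "m \<otimes> (inv m \<otimes> inv D) = m" using mc by simp
    hence "inv D = m" using mc by simp
    hence "inv D \<in> P" using mP by simp
    thus False using PinvP DP Dne by blast
  qed
  have nadj1: "\<not> adj (inv a) (inv b)"
  proof
    assume "adj (inv a) (inv b)"
    hence "inv a \<preceq> inv b \<or> inv b \<preceq> inv a" using adj_incomp by blast
    thus False using inc ac leR_iff by simp
  qed
  have nadj2: "\<not> adj u1 \<one>"
  proof
    assume "adj u1 \<one>"
    hence "close u1 \<one> \<or> close \<one> u1" using adj_close by blast
    thus False
    proof
      assume "close u1 \<one>"
      hence "\<one> \<preceq> u1 \<otimes> D" by (simp add: close_def)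
      hence "inv m \<in> P" using mc by (simp add: u1_def le_def m_assoc)
      thus False using PinvP mP mne by blast
    next
      assume "close \<one> u1"
      hence "u1 \<in> P" using zc by (simp add: close_def le_def)
      moreover have "inv u1 = D \<otimes> m" using mc by (simp add: u1_def inv_mult_group)
      hence "inv u1 \<in> P" using multP DP mP by simp
      ultimately show False using PinvP u1ne by blast
    qed
  qed
  have ne01: "inv a \<noteq> u1" "inv b \<noteq> u1"
  proof -
    have k: "x \<in> SS \<Longrightarrow> inv x \<noteq> u1" for x
    proof
      assume x: "x \<in> SS" "inv x = u1"
      hence xc: "x \<in> carrier G" by simp
      have "x = D \<otimes> m" using x(2) xc mc by (metis inv_inv u1_def inv_mult_group inv_closed DC)
      hence "inv x \<otimes> D = inv m" using mc by (simp add: inv_mult_group m_assoc)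
      moreover have "inv x \<otimes> D \<in> P" using SS_le_D[OF x(1)] unfolding le_def .
      ultimately have "inv m \<in> P" by simp
      thus False using PinvP[of m] mP mne(1) by blast
    qed
    show "inv a \<noteq> u1" "inv b \<noteq> u1" using k ab by auto
  qed
  have a1: "a \<noteq> \<one>" "b \<noteq> \<one>" using ab by (auto simp: SS_def)
  have abne: "a \<noteq> b" using inc Rrefl ac by auto
  have dz: "inv a \<noteq> z" "inv b \<noteq> z" "u1 \<noteq> z" "\<one> \<noteq> z"
  proof -
    show "inv a \<noteq> z" using inv_eq_iff[of a m] ac mc mne(2) by (simp add: z_def)
    show "inv b \<noteq> z" using inv_eq_iff[of b m] ac mc mne(3) by (simp add: z_def)
    show "u1 \<noteq> z" using mc Dne by (simp add: z_def u1_def)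
    show "\<one> \<noteq> z"
    proof
      assume "\<one> = z"
      hence "inv m = \<one>" by (simp add: z_def)
      hence "m = \<one>" using mc by simp
      thus False using mne(1) by simp
    qed
  qed
  have "\<not> six_large (link X z)"
  proof (rule four_not_large[of "inv a" u1 "inv b" \<one>])
    show "distinct [inv a, u1, inv b, \<one>]" using ne01 abne a1 u1ne inv_eq_iff ac by auto
    show "is_edge (link X z) (inv a) u1" by (rule edge_link_intro) (use adjs ne01 dz adj_sym in auto)
    show "is_edge (link X z) u1 (inv b)" by (rule edge_link_intro) (use adjs ne01 dz adj_sym in auto)
    have ia1: "inv a \<noteq> \<one>" "inv b \<noteq> \<one>" using a1 ac by auto
    have az: "adj z (inv b)" "adj \<one> (inv a)" "adj z (inv a)" using adjs adj_sym by blast+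
    show "is_edge (link X z) (inv b) \<one>" by (rule edge_link_intro) (use adjs az ia1 dz in auto)
    show "is_edge (link X z) \<one> (inv a)" by (rule edge_link_intro) (use adjs az ia1 dz in auto)
    show "\<not> is_edge (link X z) (inv a) (inv b)" using nadj1 not_edge_link by blast
    show "\<not> is_edge (link X z) u1 \<one>" using nadj2 not_edge_link by blast
  qed
  thus ?thesis using zc by blast
qed

lemma systolic_COND: "systolic_complex X \<Longrightarrow> COND"
proof (rule ccontr)
  assume s: "systolic_complex X" and "\<not> COND"
  then obtain a b where ab: "a \<in> SS" "b \<in> SS" "meetL G P a b \<notin> {\<one>, a, b} \<or> meetR G P a b \<notin> {\<one>, a, b}"
    unfolding COND_def by blast
  then obtain g where "g \<in> carrier G" "\<not> six_large (link X g)" using failL failR by blast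
  thus False using s verts_X unfolding systolic_complex_def by blast
qed

end


definition imgX :: "('v \<Rightarrow> 'w) \<Rightarrow> 'v set set \<Rightarrow> 'w set set" where
  "imgX f X = (`) f ` X"

lemma is_edge_verts: "is_edge W x y \<Longrightarrow> x \<in> verts W \<and> y \<in> verts W"
  unfolding is_edge_def verts_def by auto

lemma verts_imgX: "verts (imgX f X) = f ` verts X"
  unfolding verts_def imgX_def by auto

lemma sub_verts: "\<sigma> \<in> X \<Longrightarrow> \<sigma> \<subseteq> verts X"
  unfolding verts_def by auto

lemma imgX_mem: "inj_on f (verts X) \<Longrightarrow> \<sigma> \<subseteq> verts X \<Longrightarrow> f ` \<sigma> \<in> imgX f X \<longleftrightarrow> \<sigma> \<in> X"
proof
  assume i: "inj_on f (verts X)" and s: "\<sigma> \<subseteq> verts X" and "f ` \<sigma> \<in> imgX f X"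
  then obtain \<tau> where t: "\<tau> \<in> X" "f ` \<sigma> = f ` \<tau>" unfolding imgX_def by auto
  have tv: "\<tau> \<subseteq> verts X" using t sub_verts by blast
  have "\<sigma> = \<tau>" using inj_on_image_eq_iff[OF i s tv] t by simp
  thus "\<sigma> \<in> X" using t by simp
qed (auto simp: imgX_def)

lemma path_move_map: "path_move X p q \<Longrightarrow> path_move (imgX f X) (map f p) (map f q)"
proof (induction rule: path_move.induct)
  case (stutter xs u ys)
  show ?case using path_move.stutter[of "imgX f X" "map f xs" "f u" "map f ys"] by simp
next
  case (triangle u v w xs ys)
  have "f ` {u, v, w} \<in> imgX f X" using triangle unfolding imgX_def by (rule imageI)
  hence "{f u, f v, f w} \<in> imgX f X" by simp
  thus ?case using path_move.triangle[of "f u" "f v" "f w" "imgX f X" "map f xs" "map f ys"] by simp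
qed

lemma path_equiv_map: "path_equiv X p q \<Longrightarrow> path_equiv (imgX f X) (map f p) (map f q)"
  unfolding path_equiv_def
proof (induction rule: rtranclp_induct)
  case (step y z)
  have "path_move (imgX f X) (map f y) (map f z) \<or> path_move (imgX f X) (map f z) (map f y)"
    using step(2) path_move_map by blast
  with step(3) show ?case by (rule rtranclp.rtrancl_into_rtrancl)
qed simp

context
  fixes f :: "'v \<Rightarrow> 'w" and X :: "'v set set"
  assumes inj: "inj_on f (verts X)"
begin

definition gi where "gi = inv_into (verts X) f"

lemma gi_f[simp]: "x \<in> verts X \<Longrightarrow> gi (f x) = x"
  unfolding gi_def using inj by simp
lemma f_gi[simp]: "y \<in> f ` verts X \<Longrightarrow> f (gi y) = y"
  unfolding gi_def by (simp add: f_inv_into_f)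
lemma gi_in: "y \<in> f ` verts X \<Longrightarrow> gi y \<in> verts X"
  unfolding gi_def by (simp add: inv_into_into)

lemma pair_imgX: "x \<in> f ` verts X \<Longrightarrow> y \<in> f ` verts X \<Longrightarrow> {x, y} \<in> imgX f X \<longleftrightarrow> {gi x, gi y} \<in> X"
proof -
  assume xy: "x \<in> f ` verts X" "y \<in> f ` verts X"
  have e: "f ` {gi x, gi y} = {x, y}" using xy by simp
  have "f ` {gi x, gi y} \<in> imgX f X \<longleftrightarrow> {gi x, gi y} \<in> X" by (rule imgX_mem[OF inj]) (use xy gi_in in auto)
  thus ?thesis unfolding e .
qed

lemma edge_path_img1: "edge_path (imgX f X) p \<Longrightarrow> edge_path X (map gi p) \<and> map f (map gi p) = p"
proof -
  assume e: "edge_path (imgX f X) p"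
  have "set p \<subseteq> verts (imgX f X)" using e by (simp add: edge_path_def)
  hence sp: "set p \<subseteq> f ` verts X" by (simp add: verts_imgX)
  have "map f (map gi p) = p" using sp by (induction p) auto
  moreover have "edge_path X (map gi p)" unfolding edge_path_def
  proof (intro conjI allI impI)
    show "map gi p \<noteq> []" using e by (simp add: edge_path_def)
    show "set (map gi p) \<subseteq> verts X" using sp gi_in by auto
    fix i assume i: "Suc i < length (map gi p)"
    have "{p ! i, p ! Suc i} \<in> imgX f X" using e i unfolding edge_path_def by simp
    moreover have "p ! i \<in> f ` verts X" "p ! Suc i \<in> f ` verts X" using sp i by auto
    ultimately show "{map gi p ! i, map gi p ! Suc i} \<in> X" using pair_imgX i by simp
  qed
  ultimately show ?thesis by simp
qed

lemma edge_path_img2: "edge_path X p \<Longrightarrow> edge_path (imgX f X) (map f p)"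
  unfolding edge_path_def verts_imgX
proof (intro conjI allI impI)
  assume e: "p \<noteq> [] \<and> set p \<subseteq> verts X \<and> (\<forall>i. Suc i < length p \<longrightarrow> {p ! i, p ! Suc i} \<in> X)"
  show "map f p \<noteq> []" "set (map f p) \<subseteq> f ` verts X" using e by auto
  fix i assume i: "Suc i < length (map f p)"
  have "{p ! i, p ! Suc i} \<in> X" using e i by simp
  hence "f ` {p ! i, p ! Suc i} \<in> imgX f X" unfolding imgX_def by blast
  thus "{map f p ! i, map f p ! Suc i} \<in> imgX f X" using i by simp
qed

lemma link_imgX: "v \<in> verts X \<Longrightarrow> link (imgX f X) (f v) = imgX f (link X v)"
proof
  assume v: "v \<in> verts X"
  show "link (imgX f X) (f v) \<subseteq> imgX f (link X v)"
  proof
    fix \<tau>' assume t: "\<tau>' \<in> link (imgX f X) (f v)"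
    then obtain \<tau> where tt: "\<tau> \<in> X" "\<tau>' = f ` \<tau>" unfolding link_def imgX_def by auto
    have ts: "\<tau> \<subseteq> verts X" "insert v \<tau> \<subseteq> verts X" using tt v sub_verts by auto
    have "v \<notin> \<tau>" using t tt unfolding link_def by auto
    moreover have "f ` insert v \<tau> \<in> imgX f X" using t tt unfolding link_def by simp
    hence "insert v \<tau> \<in> X" using imgX_mem[OF inj ts(2)] by simp
    ultimately have "\<tau> \<in> link X v" using tt unfolding link_def by simp
    thus "\<tau>' \<in> imgX f (link X v)" using tt unfolding imgX_def by simp
  qed
  show "imgX f (link X v) \<subseteq> link (imgX f X) (f v)"
  proof
    fix \<tau>' assume "\<tau>' \<in> imgX f (link X v)"
    then obtain \<tau> where tt: "\<tau> \<in> link X v" "\<tau>' = f ` \<tau>" unfolding imgX_def by auto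
    have t2: "\<tau> \<in> X" "v \<notin> \<tau>" "insert v \<tau> \<in> X" using tt unfolding link_def by auto
    have ts: "\<tau> \<subseteq> verts X" using t2 sub_verts by auto
    have "f v \<notin> f ` \<tau>" using t2 ts v inj by (auto simp: inj_on_def)
    moreover have "f ` \<tau> \<in> imgX f X" unfolding imgX_def by (rule imageI) (rule t2(1))
    moreover have "f ` insert v \<tau> \<in> imgX f X" unfolding imgX_def by (rule imageI) (rule t2(3))
    moreover have "f ` insert v \<tau> = insert (f v) (f ` \<tau>)" by simp
    ultimately show "\<tau>' \<in> link (imgX f X) (f v)" using tt unfolding link_def by (simp only: mem_Collect_eq) simp
  qed
qed

lemma connected_img: "connected_complex X \<Longrightarrow> connected_complex (imgX f X)"
  unfolding connected_complex_def verts_imgX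
proof (intro conjI ballI)
  assume c: "verts X \<noteq> {} \<and> (\<forall>u\<in>verts X. \<forall>v\<in>verts X. \<exists>p. edge_path X p \<and> hd p = u \<and> last p = v)"
  show "f ` verts X \<noteq> {}" using c by simp
  fix u v assume uv: "u \<in> f ` verts X" "v \<in> f ` verts X"
  then obtain p where p: "edge_path X p" "hd p = gi u" "last p = gi v" using c gi_in by blast
  have "p \<noteq> []" using p by (simp add: edge_path_def)
  thus "\<exists>p. edge_path (imgX f X) p \<and> hd p = u \<and> last p = v"
    using edge_path_img2[OF p(1)] p uv by (intro exI[of _ "map f p"]) (simp add: hd_map last_map)
qed

lemma simply_connected_img: "simply_connected_complex X \<Longrightarrow> simply_connected_complex (imgX f X)"
  unfolding simply_connected_complex_def
proof (intro conjI allI impI)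
  assume s: "connected_complex X \<and> (\<forall>p. edge_path X p \<and> hd p = last p \<longrightarrow> path_equiv X p [hd p])"
  show "connected_complex (imgX f X)" using s connected_img by simp
  fix p assume p: "edge_path (imgX f X) p \<and> hd p = last p"
  have e: "edge_path X (map gi p)" "map f (map gi p) = p" using edge_path_img1 p by auto
  have ne: "p \<noteq> []" using p by (simp add: edge_path_def)
  have "hd (map gi p) = last (map gi p)" using p ne by (simp add: hd_map last_map)
  hence "path_equiv X (map gi p) [hd (map gi p)]" using s e(1) by blast
  hence "path_equiv (imgX f X) (map f (map gi p)) (map f [hd (map gi p)])" by (rule path_equiv_map)
  moreover have "hd p \<in> f ` verts X"
  proof -
    have "set p \<subseteq> verts (imgX f X)" using p by (simp add: edge_path_def)
    thus ?thesis using ne by (auto simp: verts_imgX)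
  qed
  hence "map f [hd (map gi p)] = [hd p]" using ne by (simp add: hd_map)
  ultimately show "path_equiv (imgX f X) p [hd p]" using e(2) by simp
qed

end

context
  fixes f :: "'v \<Rightarrow> 'w" and Z :: "'v set set"
  assumes inj: "inj_on f (verts Z)"
begin

lemma is_edge_img: "x \<in> verts Z \<Longrightarrow> y \<in> verts Z \<Longrightarrow> is_edge (imgX f Z) (f x) (f y) \<longleftrightarrow> is_edge Z x y"
proof -
  assume xy: "x \<in> verts Z" "y \<in> verts Z"
  have e: "f ` {x, y} = {f x, f y}" by simp
  have "f ` {x, y} \<in> imgX f Z \<longleftrightarrow> {x, y} \<in> Z" by (rule imgX_mem[OF inj]) (use xy in auto)
  hence "{f x, f y} \<in> imgX f Z \<longleftrightarrow> {x, y} \<in> Z" unfolding e .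
  moreover have "f x = f y \<longleftrightarrow> x = y" using inj xy by (auto simp: inj_on_def)
  ultimately show ?thesis unfolding is_edge_def by simp
qed

lemma flag_img: "flag_complex_prop Z \<Longrightarrow> flag_complex_prop (imgX f Z)"
  unfolding flag_complex_prop_def
proof (intro allI impI)
  assume fl: "\<forall>\<sigma>. finite \<sigma> \<and> \<sigma> \<noteq> {} \<and> \<sigma> \<subseteq> verts Z \<and> (\<forall>u\<in>\<sigma>. \<forall>v\<in>\<sigma>. u \<noteq> v \<longrightarrow> is_edge Z u v) \<longrightarrow> \<sigma> \<in> Z"
  fix \<sigma> assume s: "finite \<sigma> \<and> \<sigma> \<noteq> {} \<and> \<sigma> \<subseteq> verts (imgX f Z) \<and>
    (\<forall>u\<in>\<sigma>. \<forall>v\<in>\<sigma>. u \<noteq> v \<longrightarrow> is_edge (imgX f Z) u v)"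
  define \<sigma>' where "\<sigma>' = gi f Z ` \<sigma>"
  have sv: "\<sigma> \<subseteq> f ` verts Z" using s by (simp add: verts_imgX)
  have "(\<lambda>y. f (gi f Z y)) ` \<sigma> = (\<lambda>y. y) ` \<sigma>" by (rule image_cong) (use sv f_gi[OF inj] in auto)
  hence eq: "f ` \<sigma>' = \<sigma>" unfolding \<sigma>'_def image_image by simp
  have sv': "\<sigma>' \<subseteq> verts Z" using sv gi_in[OF inj] unfolding \<sigma>'_def by auto
  have "\<forall>u\<in>\<sigma>'. \<forall>v\<in>\<sigma>'. u \<noteq> v \<longrightarrow> is_edge Z u v"
  proof (intro ballI impI)
    fix u v assume uv: "u \<in> \<sigma>'" "v \<in> \<sigma>'" "u \<noteq> v"
    have "f u \<in> \<sigma>" "f v \<in> \<sigma>" using uv eq by auto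
    moreover have "f u \<noteq> f v" using uv sv' inj by (auto simp: inj_on_def)
    ultimately have "is_edge (imgX f Z) (f u) (f v)" using s by blast
    thus "is_edge Z u v" using is_edge_img uv sv' by blast
  qed
  hence "\<sigma>' \<in> Z" using fl s sv' unfolding \<sigma>'_def by auto
  thus "\<sigma> \<in> imgX f Z" using eq unfolding imgX_def by blast
qed

lemma six_large_img: "six_large Z \<Longrightarrow> six_large (imgX f Z)"
  unfolding six_large_def
proof (intro ballI allI impI)
  fix k and c :: "nat \<Rightarrow> 'w"
  assume sl: "\<forall>k\<in>{4, 5::nat}. \<forall>c::nat \<Rightarrow> 'v. inj_on c {..<k} \<and> (\<forall>i<k. is_edge Z (c i) (c ((i + 1) mod k))) \<longrightarrow>
        (\<exists>i<k. \<exists>j<k. j \<noteq> (i + 1) mod k \<and> i \<noteq> (j + 1) mod k \<and> i \<noteq> j \<and> is_edge Z (c i) (c j))"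
    and k: "k \<in> {4, 5}"
    and cy: "inj_on c {..<k} \<and> (\<forall>i<k. is_edge (imgX f Z) (c i) (c ((i + 1) mod k)))"
  have cv: "\<And>i. i < k \<Longrightarrow> c i \<in> f ` verts Z"
  proof -
    fix i assume "i < k"
    hence "is_edge (imgX f Z) (c i) (c ((i + 1) mod k))" using cy by blast
    hence "c i \<in> verts (imgX f Z)" by (rule conjunct1[OF is_edge_verts])
    thus "c i \<in> f ` verts Z" by (simp add: verts_imgX)
  qed
  define c' where "c' = gi f Z \<circ> c"
  have cv': "\<And>i. i < k \<Longrightarrow> c' i \<in> verts Z" using cv gi_in[OF inj] by (simp add: c'_def)
  have fc: "\<And>i. i < k \<Longrightarrow> f (c' i) = c i" using cv f_gi[OF inj] by (simp add: c'_def)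
  have ek: "\<And>i j. i < k \<Longrightarrow> j < k \<Longrightarrow> is_edge Z (c' i) (c' j) \<longleftrightarrow> is_edge (imgX f Z) (c i) (c j)"
  proof -
    fix i j assume ij: "i < k" "j < k"
    have "is_edge (imgX f Z) (f (c' i)) (f (c' j)) \<longleftrightarrow> is_edge Z (c' i) (c' j)"
      by (rule is_edge_img) (use cv' ij in auto)
    thus "is_edge Z (c' i) (c' j) \<longleftrightarrow> is_edge (imgX f Z) (c i) (c j)" using fc ij by simp
  qed
  have inj': "inj_on c' {..<k}"
  proof (rule inj_onI)
    fix i j assume ij: "i \<in> {..<k}" "j \<in> {..<k}" "c' i = c' j"
    have ik: "i < k" "j < k" using ij by auto
    have "c i = f (c' i)" using fc[OF ik(1)] by simp
    moreover have "c j = f (c' j)" using fc[OF ik(2)] by simp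
    ultimately have "c i = c j" using ij(3) by simp
    thus "i = j" using cy ij unfolding inj_on_def by blast
  qed
  have mk: "\<And>i. (i + 1) mod k < k" using k by auto
  have "\<forall>i<k. is_edge Z (c' i) (c' ((i + 1) mod k))" using cy ek mk by blast
  then obtain i j where ij: "i < k" "j < k" "j \<noteq> (i + 1) mod k" "i \<noteq> (j + 1) mod k" "i \<noteq> j" "is_edge Z (c' i) (c' j)"
    using sl k inj' by blast
  thus "\<exists>i<k. \<exists>j<k. j \<noteq> (i + 1) mod k \<and> i \<noteq> (j + 1) mod k \<and> i \<noteq> j \<and> is_edge (imgX f Z) (c i) (c j)"
    using ek by blast
qed

end

lemma verts_link_sub: "verts (link X v) \<subseteq> verts X"
  unfolding verts_def link_def by auto

lemma simplicial_img: "simplicial_complex X \<Longrightarrow> simplicial_complex (imgX f X)"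
  unfolding simplicial_complex_def imgX_def
proof (intro ballI conjI allI impI)
  fix \<sigma>' assume s: "\<forall>\<sigma>\<in>X. finite \<sigma> \<and> \<sigma> \<noteq> {} \<and> (\<forall>\<tau>. \<tau> \<subseteq> \<sigma> \<and> \<tau> \<noteq> {} \<longrightarrow> \<tau> \<in> X)" and t: "\<sigma>' \<in> (`) f ` X"
  then obtain \<sigma> where st: "\<sigma> \<in> X" "\<sigma>' = f ` \<sigma>" by auto
  have s\<sigma>: "finite \<sigma>" "\<sigma> \<noteq> {}" "\<forall>\<tau>. \<tau> \<subseteq> \<sigma> \<and> \<tau> \<noteq> {} \<longrightarrow> \<tau> \<in> X" using s st(1) by blast+
  show "finite \<sigma>'" "\<sigma>' \<noteq> {}" using st(2) s\<sigma> by simp_all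
  fix \<tau>' assume "\<tau>' \<subseteq> \<sigma>' \<and> \<tau>' \<noteq> {}"
  hence tt: "\<tau>' \<subseteq> f ` \<sigma>" "\<tau>' \<noteq> {}" using st by auto
  obtain \<tau> where "\<tau> \<subseteq> \<sigma>" "\<tau>' = f ` \<tau>" using tt(1) by (rule subset_imageE)
  moreover hence "\<tau> \<noteq> {}" using tt by auto
  ultimately have "\<tau> \<in> X" "\<tau>' = f ` \<tau>" using s\<sigma>(3) by blast+
  thus "\<tau>' \<in> (`) f ` X" by blast
qed

lemma systolic_img: "inj_on f (verts X) \<Longrightarrow> systolic_complex X \<Longrightarrow> systolic_complex (imgX f X)"
  unfolding systolic_complex_def
proof (intro conjI ballI)
  assume i: "inj_on f (verts X)" and s: "simplicial_complex X \<and> connected_complex X \<and> simply_connected_complex X \<and>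
     (\<forall>v\<in>verts X. flag_complex_prop (link X v) \<and> six_large (link X v))"
  have s1: "simplicial_complex X" "connected_complex X" "simply_connected_complex X"
    "\<forall>v\<in>verts X. flag_complex_prop (link X v) \<and> six_large (link X v)" using s by simp_all
  show "simplicial_complex (imgX f X)" using simplicial_img[OF s1(1)] .
  show "connected_complex (imgX f X)" using connected_img[OF i s1(2)] .
  show "simply_connected_complex (imgX f X)" using simply_connected_img[OF i s1(3)] .
  fix v' assume "v' \<in> verts (imgX f X)"
  hence "v' \<in> f ` verts X" by (simp add: verts_imgX)
  then obtain v where v: "v \<in> verts X" "v' = f v" by blast
  have il: "inj_on f (verts (link X v))" using inj_on_subset[OF i verts_link_sub] .
  have lv: "flag_complex_prop (link X v)" "six_large (link X v)" using bspec[OF s1(4) v(1)] by simp_all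
  have e: "link (imgX f X) v' = imgX f (link X v)" using link_imgX[OF i v(1)] v(2) by simp
  show "flag_complex_prop (link (imgX f X) v')" unfolding e by (rule flag_img[OF il lv(1)])
  show "six_large (link (imgX f X) v')" unfolding e by (rule six_large_img[OF il lv(2)])
qed



context gar
begin

lemma carrier_countable: "finite (simples G P D) \<Longrightarrow> countable (carrier G)"
proof -
  assume fin: "finite (simples G P D)"
  have "P \<subseteq> listprod G ` lists (simples G P D)"
  proof
    fix x assume "x \<in> P"
    then obtain xs where "set xs \<subseteq> simples G P D" "x = listprod G xs" using Pgen by blast
    thus "x \<in> listprod G ` lists (simples G P D)" by (auto simp: in_lists_conv_set)
  qed
  moreover have "countable (listprod G ` lists (simples G P D))" using fin by (intro countable_image countable_lists countable_finite)
  ultimately have cP: "countable P" by (rule countable_subset)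
  have "carrier G \<subseteq> (\<lambda>(p, q). inv p \<otimes> q) ` (P \<times> P)"
  proof
    fix x assume xc: "x \<in> carrier G"
    define m where "m = meet \<one> x"
    have mc: "m \<in> carrier G" "m \<preceq> \<one>" "m \<preceq> x" using xc meet_le1 meet_le2 by (auto simp: m_def)
    have p: "inv m \<in> P" "inv m \<otimes> x \<in> P" using mc by (auto simp: le_def)
    have "inv (inv m) \<otimes> (inv m \<otimes> x) = x" using mc xc by simp
    thus "x \<in> (\<lambda>(p, q). inv p \<otimes> q) ` (P \<times> P)" using p by force
  qed
  moreover have "countable ((\<lambda>(p, q). inv p \<otimes> q) ` (P \<times> P))" using cP by auto
  ultimately show ?thesis by (rule countable_subset)
qed

lemma lmult_X: "x \<in> carrier G \<Longrightarrow> \<sigma> \<in> X \<Longrightarrow> (\<lambda>w. x \<otimes> w) ` \<sigma> \<in> X"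
proof -
  assume x: "x \<in> carrier G" and s: "\<sigma> \<in> X"
  have s1: "finite \<sigma>" "\<sigma> \<noteq> {}" "\<sigma> \<subseteq> carrier G" "\<forall>g\<in>\<sigma>. \<forall>h\<in>\<sigma>. adj g h" using s by (auto simp: Flag_iff)
  have "\<forall>g\<in>(\<lambda>w. x \<otimes> w) ` \<sigma>. \<forall>h\<in>(\<lambda>w. x \<otimes> w) ` \<sigma>. adj g h"
  proof (intro ballI)
    fix g h assume "g \<in> (\<lambda>w. x \<otimes> w) ` \<sigma>" "h \<in> (\<lambda>w. x \<otimes> w) ` \<sigma>"
    then obtain u v where uv: "u \<in> \<sigma>" "v \<in> \<sigma>" "g = x \<otimes> u" "h = x \<otimes> v" by blast
    have "adj u v" using s1(4) uv by blast
    thus "adj g h" using adj_lmult[of x u v] x s1(3) uv by auto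
  qed
  moreover have "(\<lambda>w. x \<otimes> w) ` \<sigma> \<subseteq> carrier G" using x s1(3) by auto
  ultimately show ?thesis unfolding Flag_iff using s1 by simp
qed

lemma systolic_group_of: "finite (simples G P D) \<Longrightarrow> systolic_complex X \<Longrightarrow> systolic_group G"
proof -
  assume fin: "finite (simples G P D)" and sys: "systolic_complex X"
  obtain f :: "'a \<Rightarrow> nat" where inj: "inj_on f (carrier G)"
    using carrier_countable[OF fin] unfolding countable_def by blast
  define Y where "Y = imgX f X"
  define E where "E = f ` carrier G"
  define h where "h = inv_into (carrier G) f"
  define \<phi> where "\<phi> x = restrict (\<lambda>n. f (x \<otimes> h n)) E" for x
  have inj': "inj_on f (verts X)" using inj verts_X by simp
  have vY: "verts Y = E" unfolding Y_def E_def by (simp add: verts_imgX verts_X)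
  have hE: "n \<in> E \<Longrightarrow> h n \<in> carrier G \<and> f (h n) = n" for n
    unfolding h_def E_def by (simp add: inv_into_into f_inv_into_f)
  have hf: "w \<in> carrier G \<Longrightarrow> h (f w) = w" for w unfolding h_def using inj by simp
  have phif: "x \<in> carrier G \<Longrightarrow> w \<in> carrier G \<Longrightarrow> \<phi> x (f w) = f (x \<otimes> w)" for x w
    unfolding \<phi>_def E_def using hf by simp
  have phiimg: "x \<in> carrier G \<Longrightarrow> \<sigma> \<subseteq> carrier G \<Longrightarrow> \<phi> x ` (f ` \<sigma>) = f ` ((\<lambda>w. x \<otimes> w) ` \<sigma>)" for x \<sigma>
  proof -
    assume a: "x \<in> carrier G" "\<sigma> \<subseteq> carrier G"
    have "\<phi> x ` (f ` \<sigma>) = (\<lambda>w. \<phi> x (f w)) ` \<sigma>" by (simp add: image_image)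
    also have "\<dots> = (\<lambda>w. f (x \<otimes> w)) ` \<sigma>" by (rule image_cong) (use a phif in auto)
    finally show ?thesis by (simp add: image_image)
  qed
  have phiBij: "x \<in> carrier G \<Longrightarrow> \<phi> x \<in> Bij E" for x
  proof -
    assume x: "x \<in> carrier G"
    have "\<phi> x \<in> extensional E" unfolding \<phi>_def by simp
    moreover have "inj_on (\<phi> x) E"
    proof (rule inj_onI)
      fix n n' assume nn: "n \<in> E" "n' \<in> E" "\<phi> x n = \<phi> x n'"
      hence "f (x \<otimes> h n) = f (x \<otimes> h n')" unfolding \<phi>_def by simp
      hence "x \<otimes> h n = x \<otimes> h n'" using inj hE nn x by (auto simp: inj_on_def)
      hence "h n = h n'" using hE nn x by simp
      thus "n = n'" using hE nn by metis
    qed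
    moreover have "\<phi> x ` E = E"
    proof
      show "\<phi> x ` E \<subseteq> E" using hE x unfolding \<phi>_def E_def by auto
      show "E \<subseteq> \<phi> x ` E"
      proof
        fix n assume n: "n \<in> E"
        have "h n \<in> carrier G" using hE n by simp
        hence "f (inv x \<otimes> h n) \<in> E" using x by (simp add: E_def)
        moreover have "\<phi> x (f (inv x \<otimes> h n)) = n" using phif[of x "inv x \<otimes> h n"] x hE n
          by (simp add: m_assoc[symmetric])
        ultimately show "n \<in> \<phi> x ` E" by force
      qed
    qed
    ultimately show ?thesis unfolding Bij_def bij_betw_def by simp
  qed
  have ga: "group_action G E \<phi>"
    unfolding group_action_def group_hom_def group_hom_axioms_def
  proof (intro conjI)
    show "group G" by (rule grp)
    show "group (BijGroup E)" by (rule group_BijGroup)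
    show "\<phi> \<in> hom G (BijGroup E)" unfolding hom_def
    proof (intro CollectI conjI ballI)
      show "\<phi> \<in> carrier G \<rightarrow> carrier (BijGroup E)" using phiBij by (auto simp: BijGroup_def)
      fix x y assume xy: "x \<in> carrier G" "y \<in> carrier G"
      have "\<phi> x \<otimes>\<^bsub>BijGroup E\<^esub> \<phi> y = compose E (\<phi> x) (\<phi> y)" using phiBij xy by (simp add: BijGroup_def)
      also have "\<dots> = \<phi> (x \<otimes> y)"
      proof (rule ext)
        fix n show "compose E (\<phi> x) (\<phi> y) n = \<phi> (x \<otimes> y) n"
        proof (cases "n \<in> E")
          case True
          have "h n \<in> carrier G" using hE True by simp
          hence "\<phi> y n = f (y \<otimes> h n)" using True by (simp add: \<phi>_def)
          moreover have "f (y \<otimes> h n) \<in> E" using xy \<open>h n \<in> carrier G\<close> by (simp add: E_def)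
          ultimately have "\<phi> x (\<phi> y n) = f (x \<otimes> (y \<otimes> h n))" using phif xy \<open>h n \<in> carrier G\<close> by simp
          moreover have "compose E (\<phi> x) (\<phi> y) n = \<phi> x (\<phi> y n)" using True by (simp add: compose_def)
          moreover have "\<phi> (x \<otimes> y) n = f (x \<otimes> (y \<otimes> h n))" using True xy \<open>h n \<in> carrier G\<close>
            by (simp add: \<phi>_def m_assoc)
          ultimately show ?thesis by simp
        next
          case False thus ?thesis by (simp add: compose_def \<phi>_def)
        qed
      qed
      finally show "\<phi> (x \<otimes> y) = \<phi> x \<otimes>\<^bsub>BijGroup E\<^esub> \<phi> y" by simp
    qed
  qed
  have simp_act: "\<forall>x\<in>carrier G. \<forall>\<sigma>'\<in>Y. \<phi> x ` \<sigma>' \<in> Y"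
  proof (intro ballI)
    fix x \<sigma>' assume x: "x \<in> carrier G" and s: "\<sigma>' \<in> Y"
    then obtain \<sigma> where st: "\<sigma> \<in> X" "\<sigma>' = f ` \<sigma>" unfolding Y_def imgX_def by auto
    have sc: "\<sigma> \<subseteq> carrier G" using st by (simp add: Flag_iff)
    have "\<phi> x ` \<sigma>' = f ` ((\<lambda>w. x \<otimes> w) ` \<sigma>)" using phiimg x sc st by simp
    moreover have "(\<lambda>w. x \<otimes> w) ` \<sigma> \<in> X" using lmult_X x st by simp
    ultimately show "\<phi> x ` \<sigma>' \<in> Y" unfolding Y_def imgX_def by simp
  qed
  have proper: "\<forall>F. finite F \<and> F \<subseteq> verts Y \<longrightarrow> finite {x \<in> carrier G. \<phi> x ` F \<inter> F \<noteq> {}}"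
  proof (intro allI impI)
    fix F assume F: "finite F \<and> F \<subseteq> verts Y"
    have "{x \<in> carrier G. \<phi> x ` F \<inter> F \<noteq> {}} \<subseteq> (\<lambda>(n, n'). h n' \<otimes> inv (h n)) ` (F \<times> F)"
    proof
      fix x assume "x \<in> {x \<in> carrier G. \<phi> x ` F \<inter> F \<noteq> {}}"
      then obtain n where n: "x \<in> carrier G" "n \<in> F" "\<phi> x n \<in> F" by blast
      have nE: "n \<in> E" using n F vY by auto
      have hn: "h n \<in> carrier G" using hE nE by simp
      have "\<phi> x n = f (x \<otimes> h n)" using nE by (simp add: \<phi>_def)
      hence "h (\<phi> x n) = x \<otimes> h n" using hf n hn by simp
      hence "h (\<phi> x n) \<otimes> inv (h n) = x" using hn n by (simp add: m_assoc)
      thus "x \<in> (\<lambda>(n, n'). h n' \<otimes> inv (h n)) ` (F \<times> F)" using n by force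
    qed
    moreover have "finite ((\<lambda>(n, n'). h n' \<otimes> inv (h n)) ` (F \<times> F))" using F by simp
    ultimately show "finite {x \<in> carrier G. \<phi> x ` F \<inter> F \<noteq> {}}" by (rule finite_subset)
  qed
  define K0 where "K0 = {\<sigma> \<in> X. \<one> \<in> \<sigma>}"
  have finSS: "finite SS" using fin by (simp add: SS_def)
  have K0sub: "K0 \<subseteq> Pow (insert \<one> (SS \<union> (\<lambda>x. inv x) ` SS))"
  proof
    fix \<sigma> assume "\<sigma> \<in> K0"
    hence s: "\<sigma> \<in> X" "\<one> \<in> \<sigma>" by (auto simp: K0_def)
    have "\<sigma> \<subseteq> insert \<one> (SS \<union> (\<lambda>x. inv x) ` SS)"
    proof
      fix u assume u: "u \<in> \<sigma>"
      have "adj \<one> u" using s u by (simp add: Flag_iff)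
      hence "u \<in> carrier G" "u = \<one> \<or> u \<in> SS \<or> inv u \<in> SS" by (auto simp: adj_def)
      thus "u \<in> insert \<one> (SS \<union> (\<lambda>x. inv x) ` SS)" by (metis UnI1 UnI2 image_eqI inv_inv insertCI)
    qed
    thus "\<sigma> \<in> Pow (insert \<one> (SS \<union> (\<lambda>x. inv x) ` SS))" by simp
  qed
  have finK0: "finite K0" using K0sub finSS by (meson finite_Pow_iff finite_Un finite_imageI finite_insert finite_subset)
  define K where "K = imgX f K0"
  have cocomp: "\<exists>K. finite K \<and> K \<subseteq> Y \<and> (\<forall>\<sigma>\<in>Y. \<exists>g\<in>carrier G. \<exists>\<tau>\<in>K. \<sigma> \<subseteq> \<phi> g ` \<tau>)"
  proof (intro exI conjI ballI)
    show "finite K" using finK0 by (simp add: K_def imgX_def)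
    show "K \<subseteq> Y" unfolding K_def Y_def imgX_def K0_def by auto
    fix \<sigma>' assume "\<sigma>' \<in> Y"
    then obtain \<sigma> where st: "\<sigma> \<in> X" "\<sigma>' = f ` \<sigma>" unfolding Y_def imgX_def by auto
    have sc: "\<sigma> \<subseteq> carrier G" "\<sigma> \<noteq> {}" using st by (auto simp: Flag_iff)
    then obtain w where w: "w \<in> \<sigma>" by blast
    have wc: "w \<in> carrier G" using w sc by auto
    define \<tau> where "\<tau> = (\<lambda>u. inv w \<otimes> u) ` \<sigma>"
    have tX: "\<tau> \<in> X" unfolding \<tau>_def using lmult_X wc st by simp
    have t1: "\<one> \<in> \<tau>" unfolding \<tau>_def using w wc by force
    have tc: "\<tau> \<subseteq> carrier G" using tX by (simp add: Flag_iff)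
    have "(\<lambda>u. w \<otimes> u) ` \<tau> = (\<lambda>u. w \<otimes> (inv w \<otimes> u)) ` \<sigma>" unfolding \<tau>_def by (simp add: image_image)
    also have "\<dots> = (\<lambda>u. u) ` \<sigma>" by (rule image_cong) (use sc wc in auto)
    also have "\<dots> = \<sigma>" by simp
    finally have "\<phi> w ` (f ` \<tau>) = \<sigma>'" using phiimg[OF wc tc] st by simp
    moreover have "f ` \<tau> \<in> K" using tX t1 unfolding K_def imgX_def K0_def by blast
    ultimately show "\<exists>g\<in>carrier G. \<exists>\<tau>\<in>K. \<sigma>' \<subseteq> \<phi> g ` \<tau>" using wc by blast
  qed
  have "systolic_complex Y" unfolding Y_def by (rule systolic_img[OF inj' sys])
  moreover have "geometric_simplicial_action G Y \<phi>"
    unfolding geometric_simplicial_action_def using ga vY simp_act proper cocomp by simp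
  ultimately show ?thesis unfolding systolic_group_typ_def by blast
qed

end


theorem mainTheorem9:
  fixes G :: "('a, 'b) monoid_scheme" and P :: "'a set" and \<Delta> :: 'a
  assumes "garside_finite_type G P \<Delta>"
  defines "S \<equiv> simples G P \<Delta> - {\<one>\<^bsub>G\<^esub>}"
  shows "(systolic_complex (Flag G S) \<longleftrightarrow>
           (\<forall>a\<in>S. \<forall>b\<in>S. meetL G P a b \<in> {\<one>\<^bsub>G\<^esub>, a, b} \<and>
                         meetR G P a b \<in> {\<one>\<^bsub>G\<^esub>, a, b}))
       \<and> (systolic_complex (Flag G S) \<longrightarrow> systolic_group G)"
proof -
  have gs: "garside_structure G P \<Delta>" and fin: "finite (simples G P \<Delta>)"
    using assms(1) unfolding garside_finite_type_def by auto
  interpret gar G P \<Delta> by (unfold_locales) (rule gs)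
  have Seq: "S = SS" by (simp add: S_def SS_def)
  have i1: "systolic_complex (Flag G S) \<longleftrightarrow>
           (\<forall>a\<in>S. \<forall>b\<in>S. meetL G P a b \<in> {\<one>\<^bsub>G\<^esub>, a, b} \<and> meetR G P a b \<in> {\<one>\<^bsub>G\<^esub>, a, b})"
    unfolding Seq using COND_systolic systolic_COND unfolding COND_def by blast
  have i2: "systolic_complex (Flag G S) \<longrightarrow> systolic_group G"
    unfolding Seq using systolic_group_of fin by blast
  show ?thesis using i1 i2 by blast
qed

end
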